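(* Every finitely generated group is poly-ccc; that is, every finitely generated group $G$ admits a sequence of fair polytilings $(P_n)_{n\in\mathbb{N}}$ that is centered, cofinal, and coherent.
   Context: For a countable group $G$, a tuple $(T_1,\dots,T_k)$ of finite subsets of $G$, each containing $1_G$, is a polytile if there are non-empty sets $\Delta_1,\dots,\Delta_k\subseteq G$ with $G$ the disjoint union $\coprod_{1\le i\le k,\ \delta\in\Delta_i}\delta T_i$; then $P=(\Delta_1,\dots,\Delta_k;T_1,\dots,T_k)$ is a polytiling, and this partition of $G$ is the partition induced by $P$. The polytiling is fair if $|T_1|=\dots=|T_k|$. A sequence $P_n=(\Delta^n_1,\dots,\Delta^n_{k(n)};T^n_1,\dots,T^n_{k(n)})$ of polytilings is coherent if for each $n$ the partition induced by $P_n$ is finer than that induced by $P_{n+1}$; centered if $1_G\in\Delta_1^n$ for all $n$; cofinal if $T_1^n\subseteq T_1^{n+1}$ for all $n$ and $G=\bigcup_n T_1^n$. $G$ is poly-ccc if it admits a centered, cofinal, coherent sequence of fair polytilings. *)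

theory Defs
  imports "HOL-Algebra.Generated_Groups" "HOL-Algebra.Coset" "HOL-Library.Countable_Set"
begin

(* A k-tuple (T_0,...,T_{k-1}) of tiles with centre sets (Delta_0,...,Delta_{k-1}),
   indexed by i < k (0-based; the paper's T_1 is T 0). Tiles are left translates
   delta <# T i. *)
definition polytiling ::
  "('a, 'b) monoid_scheme \<Rightarrow> nat \<Rightarrow> (nat \<Rightarrow> 'a set) \<Rightarrow> (nat \<Rightarrow> 'a set) \<Rightarrow> bool" where
  "polytiling G k \<Delta> T \<longleftrightarrow>
     1 \<le> k \<and>
     (\<forall>i<k. finite (T i) \<and> T i \<subseteq> carrier G \<and> \<one>\<^bsub>G\<^esub> \<in> T i) \<and>
     (\<forall>i<k. \<Delta> i \<noteq> {} \<and> \<Delta> i \<subseteq> carrier G) \<and>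
     (\<forall>g\<in>carrier G. \<exists>!(i, \<delta>). i < k \<and> \<delta> \<in> \<Delta> i \<and> g \<in> \<delta> <#\<^bsub>G\<^esub> T i)"

definition fair_polytiling ::
  "('a, 'b) monoid_scheme \<Rightarrow> nat \<Rightarrow> (nat \<Rightarrow> 'a set) \<Rightarrow> (nat \<Rightarrow> 'a set) \<Rightarrow> bool" where
  "fair_polytiling G k \<Delta> T \<longleftrightarrow>
     polytiling G k \<Delta> T \<and> (\<forall>i<k. \<forall>j<k. card (T i) = card (T j))"

definition induced_partition ::
  "('a, 'b) monoid_scheme \<Rightarrow> nat \<Rightarrow> (nat \<Rightarrow> 'a set) \<Rightarrow> (nat \<Rightarrow> 'a set) \<Rightarrow> 'a set set" where
  "induced_partition G k \<Delta> T = {\<delta> <#\<^bsub>G\<^esub> T i | i \<delta>. i < k \<and> \<delta> \<in> \<Delta> i}"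

definition finer :: "'a set set \<Rightarrow> 'a set set \<Rightarrow> bool" where
  "finer P Q \<longleftrightarrow> (\<forall>A\<in>P. \<exists>B\<in>Q. A \<subseteq> B)"

definition poly_ccc :: "('a, 'b) monoid_scheme \<Rightarrow> bool" where
  "poly_ccc G \<longleftrightarrow> countable (carrier G) \<and>
     (\<exists>(k :: nat \<Rightarrow> nat) (\<Delta> :: nat \<Rightarrow> nat \<Rightarrow> 'a set) (T :: nat \<Rightarrow> nat \<Rightarrow> 'a set).
        (\<forall>n. fair_polytiling G (k n) (\<Delta> n) (T n)) \<and>
        (\<forall>n. finer (induced_partition G (k n) (\<Delta> n) (T n))
                    (induced_partition G (k (Suc n)) (\<Delta> (Suc n)) (T (Suc n)))) \<and>
        (\<forall>n. \<one>\<^bsub>G\<^esub> \<in> \<Delta> n 0) \<and>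
        (\<forall>n. T n 0 \<subseteq> T (Suc n) 0) \<and> (\<Union>n. T n 0) = carrier G)"

definition finitely_generated :: "('a, 'b) monoid_scheme \<Rightarrow> bool" where
  "finitely_generated G \<longleftrightarrow>
     (\<exists>S. finite S \<and> S \<subseteq> carrier G \<and> generate G S = carrier G)"

end

theory Submission
  imports Defs
begin

lemma relpow_pad:
  assumes "(x,y) \<in> R ^^ a" "(y,y) \<in> R" "a \<le> b"
  shows "(x,y) \<in> R ^^ b"
proof -
  have "(y,y) \<in> R ^^ k" for k
    by (induction k) (auto intro: relpow_Suc_I assms(2) relpow_0_I)
  then have "(x,y) \<in> R ^^ (a + (b - a))" using assms(1) relpow_trans by fast
  then show ?thesis using assms(3) by simp
qed

lemma relpow_sym:
  assumes "\<And>x y. (x,y) \<in> R \<Longrightarrow> (y,x) \<in> R" "(x,y) \<in> R ^^ n"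
  shows "(y,x) \<in> R ^^ n"
  using assms(2)
proof (induction n arbitrary: y)
  case 0 then have "x = y" by (rule relpow_0_E) then show ?case by (simp add: relpow_0_I)
next
  case (Suc n)
  then obtain z where "(x,z) \<in> R ^^ n" "(z,y) \<in> R" by (auto elim: relpow_Suc_E)
  have "(z,x) \<in> R ^^ n" using Suc.IH \<open>(x,z) \<in> R ^^ n\<close> by blast
  then show ?case using \<open>(z,y) \<in> R\<close> assms(1) by (blast intro: relpow_Suc_I2)
qed

lemma relpow_mono_rel:
  fixes R :: "('a \<times> 'a) set"
  assumes "R \<subseteq> S" "(x,y) \<in> R ^^ n" shows "(x,y) \<in> S ^^ n"
  using assms(2)
proof (induction n arbitrary: y)
  case 0 then have "x = y" by (rule relpow_0_E) then show ?case by (simp add: relpow_0_I)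
next
  case (Suc n)
  then obtain z where "(x,z) \<in> R ^^ n" "(z,y) \<in> R" by (auto elim: relpow_Suc_E)
  then show ?case using Suc assms(1) by (auto intro: relpow_Suc_I)
qed

lemma relpow_mult:
  fixes R :: "('a \<times> 'a) set"
  assumes "\<And>x y. (x,y) \<in> R \<Longrightarrow> (x,y) \<in> S ^^ a" "(x,y) \<in> R ^^ n"
  shows "(x,y) \<in> S ^^ (n * a)"
  using assms(2)
proof (induction n arbitrary: y)
  case 0 then have "x = y" by (rule relpow_0_E) then show ?case by (simp add: relpow_0_I)
next
  case (Suc n)
  then obtain z where "(x,z) \<in> R ^^ n" "(z,y) \<in> R" by (auto elim: relpow_Suc_E)
  then have "(x,z) \<in> S ^^ (n*a)" "(z,y) \<in> S ^^ a" using Suc assms(1) by auto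
  then have "(x,y) \<in> S ^^ (n*a + a)" by (rule relpow_trans)
  then show ?case by (simp add: add.commute)
qed

lemma successively_concat:
  assumes "\<forall>xs\<in>set xss. xs \<noteq> [] \<and> successively R xs"
    "successively (\<lambda>xs ys. R (last xs) (hd ys)) xss"
  shows "successively R (concat xss)"
  using assms
proof (induction xss)
  case Nil then show ?case by simp
next
  case (Cons xs xss)
  show ?case
  proof (cases xss)
    case Nil then show ?thesis using Cons by simp
  next
    case (Cons ys yss)
    then have h: "hd (concat xss) = hd ys" using Cons.prems by simp
    have "successively R (concat xss)" using Cons.IH Cons.prems \<open>xss = ys # yss\<close> by (simp add: successively_Cons)
    moreover have "concat xss \<noteq> []" using Cons.prems \<open>xss = ys # yss\<close> by simp
    ultimately show ?thesis using Cons.prems h \<open>xss = ys # yss\<close>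
      by (simp add: successively_append_iff)
  qed
qed

lemma successively_all:
  assumes "\<forall>a\<in>set xs. \<forall>b\<in>set xs. P a b" shows "successively P xs"
  using assms
proof (induction xs)
  case Nil then show ?case by simp
next
  case (Cons a xs) then show ?case by (cases xs) auto
qed


locale rtree =
  fixes X :: "'x set" and r :: 'x and p :: "'x \<Rightarrow> 'x" and dep :: "'x \<Rightarrow> nat"
  assumes r_in: "r \<in> X" and infX: "infinite X"
    and par: "\<And>v. v \<in> X \<Longrightarrow> v \<noteq> r \<Longrightarrow> p v \<in> X \<and> Suc (dep (p v)) = dep v"
    and dep_r: "dep r = 0"
    and fin_ch: "\<And>v. v \<in> X \<Longrightarrow> finite {w \<in> X. w \<noteq> r \<and> p w = v}"
begin

definition ch :: "'x \<Rightarrow> 'x set" where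
  "ch v = {w \<in> X. w \<noteq> r \<and> p w = v}"

definition desc :: "'x \<Rightarrow> 'x set" where
  "desc v = {u \<in> X. dep v \<le> dep u \<and> (p ^^ (dep u - dep v)) u = v}"

definition Tr :: "('x \<times> 'x) set" where
  "Tr = {(x,y). x \<in> X \<and> y \<in> X \<and> (x = y \<or> (x \<noteq> r \<and> p x = y) \<or> (y \<noteq> r \<and> p y = x))}"

definition N3 :: "'x \<Rightarrow> 'x \<Rightarrow> bool" where
  "N3 x y \<longleftrightarrow> (x,y) \<in> Tr ^^ 3"

lemma dep0: "v \<in> X \<Longrightarrow> dep v = 0 \<Longrightarrow> v = r"
  using par by fastforce

lemma ch_D: "w \<in> ch v \<Longrightarrow> w \<in> X \<and> w \<noteq> r \<and> p w = v \<and> v \<in> X \<and> dep w = Suc (dep v)"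
  unfolding ch_def using par by auto

lemma Tr_sym: "(x,y) \<in> Tr \<Longrightarrow> (y,x) \<in> Tr"
  unfolding Tr_def by auto

lemma Tr_refl: "x \<in> X \<Longrightarrow> (x,x) \<in> Tr"
  unfolding Tr_def by auto

lemma Tr_ch: "w \<in> ch v \<Longrightarrow> (v,w) \<in> Tr \<and> (w,v) \<in> Tr"
  using ch_D unfolding Tr_def by auto

lemma Tr_X: "(x,y) \<in> Tr \<Longrightarrow> x \<in> X \<and> y \<in> X"
  unfolding Tr_def by auto

lemma N3_I: "(a,b) \<in> Tr \<Longrightarrow> (b,c) \<in> Tr \<Longrightarrow> (c,d) \<in> Tr \<Longrightarrow> N3 a d"
  unfolding N3_def numeral_3_eq_3
  by (meson relpow_0_I relpow_Suc_I)

lemma N3_I2: "(a,b) \<in> Tr \<Longrightarrow> (b,c) \<in> Tr \<Longrightarrow> N3 a c"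
  using N3_I Tr_refl Tr_X by blast

lemma pow_in: "u \<in> X \<Longrightarrow> k \<le> dep u \<Longrightarrow> (p ^^ k) u \<in> X \<and> dep ((p ^^ k) u) = dep u - k"
proof (induction k)
  case 0 then show ?case by simp
next
  case (Suc k)
  then have h: "(p ^^ k) u \<in> X" "dep ((p ^^ k) u) = dep u - k" by auto
  then have "(p ^^ k) u \<noteq> r" using Suc.prems dep_r by auto
  then show ?case using par[OF h(1)] h by auto
qed

lemma desc_self: "v \<in> X \<Longrightarrow> v \<in> desc v"
  unfolding desc_def by auto

lemma desc_D: "u \<in> desc v \<Longrightarrow> u \<in> X \<and> v \<in> X \<and> dep v \<le> dep u \<and> (p ^^ (dep u - dep v)) u = v"
proof -
  assume a: "u \<in> desc v"
  then have h: "u \<in> X" "dep v \<le> dep u" "(p ^^ (dep u - dep v)) u = v" unfolding desc_def by auto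
  have "(p ^^ (dep u - dep v)) u \<in> X" using pow_in[OF h(1), of "dep u - dep v"] by simp
  then show ?thesis using h by simp
qed

lemma desc_trans: "u \<in> desc w \<Longrightarrow> w \<in> desc v \<Longrightarrow> u \<in> desc v"
proof -
  assume a: "u \<in> desc w" "w \<in> desc v"
  have A: "u \<in> X" "dep w \<le> dep u" "(p ^^ (dep u - dep w)) u = w" using desc_D[OF a(1)] by auto
  have B: "dep v \<le> dep w" "(p ^^ (dep w - dep v)) w = v" using desc_D[OF a(2)] by auto
  have d: "dep u - dep v = (dep w - dep v) + (dep u - dep w)" using A B by simp
  have "(p ^^ (dep u - dep v)) u = (p ^^ (dep w - dep v)) ((p ^^ (dep u - dep w)) u)"
    by (simp only: d funpow_add o_apply)
  then show ?thesis using A B unfolding desc_def by simp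
qed

lemma desc_ch: "w \<in> ch v \<Longrightarrow> w \<in> desc v"
  using ch_D unfolding desc_def by auto

lemma desc_sub: "w \<in> ch v \<Longrightarrow> desc w \<subseteq> desc v"
  using desc_ch desc_trans by blast

lemma desc_notin: "w \<in> ch v \<Longrightarrow> v \<notin> desc w"
  using ch_D desc_D by fastforce

lemma desc_comp:
  assumes "u \<in> desc a" "u \<in> desc b" "dep a \<le> dep b"
  shows "b \<in> desc a"
proof -
  have A: "u \<in> X" "dep a \<le> dep u" "(p ^^ (dep u - dep a)) u = a" using desc_D[OF assms(1)] by auto
  have B: "b \<in> X" "dep b \<le> dep u" "(p ^^ (dep u - dep b)) u = b" using desc_D[OF assms(2)] by auto
  have d: "dep u - dep a = (dep b - dep a) + (dep u - dep b)" using A B assms(3) by simp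
  have "(p ^^ (dep b - dep a)) b = (p ^^ (dep b - dep a)) ((p ^^ (dep u - dep b)) u)"
    using B by simp
  also have "\<dots> = (p ^^ (dep u - dep a)) u" by (simp only: d funpow_add o_apply)
  finally show ?thesis using A B assms(3) unfolding desc_def by simp
qed

lemma desc_eqdep: "u \<in> desc v \<Longrightarrow> dep u = dep v \<Longrightarrow> u = v"
  using desc_D by fastforce

lemma desc_parent: "u \<in> desc v \<Longrightarrow> u \<noteq> v \<Longrightarrow> \<exists>w\<in>ch v. u \<in> desc w"
proof -
  assume a: "u \<in> desc v" "u \<noteq> v"
  then have lt: "dep v < dep u" using desc_D desc_eqdep by fastforce
  define k where "k = dep u - dep v - 1"
  define w where "w = (p ^^ k) u"
  have uX: "u \<in> X" using a desc_D by auto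
  have wX: "w \<in> X" and dw: "dep w = dep v + 1" using pow_in[OF uX, of k] lt unfolding w_def k_def by auto
  have "p w = (p ^^ (Suc k)) u" unfolding w_def by simp
  also have "Suc k = dep u - dep v" unfolding k_def using lt by simp
  finally have pw: "p w = v" using a desc_D by auto
  have "w \<noteq> r" using dw dep_r by auto
  then have "w \<in> ch v" using wX pw unfolding ch_def by auto
  have "dep u - dep w = k" using dw lt unfolding k_def by simp
  then have "(p ^^ (dep u - dep w)) u = w" unfolding w_def by simp
  then have "u \<in> desc w" unfolding desc_def using uX dw lt by simp
  with \<open>w \<in> ch v\<close> show ?thesis by blast
qed

lemma desc_eq: "v \<in> X \<Longrightarrow> desc v = insert v (\<Union>w\<in>ch v. desc w)"
proof
  assume v: "v \<in> X"
  show "desc v \<subseteq> insert v (\<Union>w\<in>ch v. desc w)"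
  proof
    fix u assume "u \<in> desc v"
    then show "u \<in> insert v (\<Union>w\<in>ch v. desc w)" using desc_parent[of u v] by (cases "u = v") auto
  qed
  show "insert v (\<Union>w\<in>ch v. desc w) \<subseteq> desc v" using desc_self[OF v] desc_sub by auto
qed

lemma desc_pair_disj: "w \<in> ch v \<Longrightarrow> w' \<in> ch v \<Longrightarrow> w \<noteq> w' \<Longrightarrow> desc w \<inter> desc w' = {}"
proof (rule ccontr)
  assume a: "w \<in> ch v" "w' \<in> ch v" "w \<noteq> w'" "desc w \<inter> desc w' \<noteq> {}"
  then obtain u where u: "u \<in> desc w" "u \<in> desc w'" by blast
  have "dep w = dep w'" using a ch_D by simp
  then have "w' \<in> desc w" using desc_comp[OF u] by simp
  then have "w' = w" using desc_eqdep \<open>dep w = dep w'\<close> by simp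
  then show False using a(3) by simp
qed

lemma desc_p: "u \<in> desc v \<Longrightarrow> u \<noteq> v \<Longrightarrow> p u \<in> desc v"
proof -
  assume a: "u \<in> desc v" "u \<noteq> v"
  then obtain w where w: "w \<in> ch v" "u \<in> desc w" using desc_parent by blast
  show ?thesis
  proof (cases "u = w")
    case True then show ?thesis using w ch_D desc_self by auto
  next
    case False
    then have "dep w < dep u" using w desc_D desc_eqdep by fastforce
    then have "u \<noteq> r" using dep_r by auto
    then have "p u \<in> X" "Suc (dep (p u)) = dep u" using par w desc_D by auto
    moreover have "Suc (dep (p u) - dep w) = dep u - dep w"
      using \<open>dep w < dep u\<close> \<open>Suc (dep (p u)) = dep u\<close> by simp
    moreover have "(p ^^ (dep (p u) - dep w)) (p u) = (p ^^ (Suc (dep (p u) - dep w))) u"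
      by (simp only: funpow_Suc_right o_apply)
    ultimately have "p u \<in> desc w" unfolding desc_def using w desc_D \<open>dep w < dep u\<close>
      by auto
    then show ?thesis using w desc_sub by blast
  qed
qed

lemma desc_r: "u \<in> X \<Longrightarrow> u \<in> desc r"
proof -
  assume u: "u \<in> X"
  have "(p ^^ dep u) u \<in> X" "dep ((p ^^ dep u) u) = 0" using pow_in[OF u, of "dep u"] by auto
  then have "(p ^^ dep u) u = r" using dep0 by blast
  then show ?thesis unfolding desc_def using u dep_r by simp
qed

lemma desc_finite_card: "v \<in> X \<Longrightarrow> finite (desc v) \<Longrightarrow> w \<in> ch v \<Longrightarrow> card (desc w) < card (desc v)"
proof -
  assume a: "v \<in> X" "finite (desc v)" "w \<in> ch v"
  have "desc w \<subset> desc v" using desc_notin[OF a(3)] desc_self[OF a(1)] desc_sub[OF a(3)] by blast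
  then show ?thesis using a(2) by (rule psubset_card_mono[rotated])
qed

definition core :: "'x \<Rightarrow> bool" where
  "core v \<longleftrightarrow> v \<in> X \<and> infinite (desc v)"

lemma core_ch: "core v \<Longrightarrow> \<exists>w\<in>ch v. core w"
proof (rule ccontr)
  assume a: "core v" "\<not> (\<exists>w\<in>ch v. core w)"
  then have "finite (ch v)" using fin_ch unfolding core_def ch_def by auto
  moreover have "\<forall>w\<in>ch v. finite (desc w)" using a ch_D unfolding core_def by auto
  ultimately have "finite (insert v (\<Union>w\<in>ch v. desc w))" by simp
  then have "finite (desc v)" using desc_eq[of v] a(1) unfolding core_def by metis
  then show False using a unfolding core_def by simp
qed

lemma core_r: "core r"
proof -
  have "X \<subseteq> desc r" using desc_r by blast
  then have "infinite (desc r)" using infX finite_subset by blast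
  then show ?thesis unfolding core_def using r_in by simp
qed

lemma core_anc: "u \<in> desc v \<Longrightarrow> core u \<Longrightarrow> core v"
proof -
  assume a: "u \<in> desc v" "core u"
  have "desc u \<subseteq> desc v" using desc_trans a(1) by blast
  then show ?thesis using a desc_D finite_subset unfolding core_def by blast
qed

definition chl :: "'x \<Rightarrow> 'x list" where
  "chl v = (SOME xs. distinct xs \<and> set xs = ch v)"

lemma chl: "v \<in> X \<Longrightarrow> distinct (chl v) \<and> set (chl v) = ch v"
proof -
  assume v: "v \<in> X"
  obtain xs where "distinct xs" "set xs = ch v"
    using finite_distinct_list[OF fin_ch[OF v]] unfolding ch_def by metis
  then show ?thesis unfolding chl_def by (metis (mono_tags, lifting) someI_ex)
qed


lemma hd_concat_map: "cl \<noteq> [] \<Longrightarrow> F (hd cl) \<noteq> [] \<Longrightarrow> hd (concat (map F cl)) = hd (F (hd cl))"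
  by (cases cl) auto

lemma last_concat_map: "cl \<noteq> [] \<Longrightarrow> \<forall>w\<in>set cl. F w \<noteq> [] \<Longrightarrow> last (concat (map F cl)) = last (F (last cl))"
proof (induction cl)
  case Nil then show ?case by simp
next
  case (Cons a cl) then show ?case by (cases cl) auto
qed

lemma concat_part:
  assumes "distinct cl" "set cl \<subseteq> ch v"
    "\<forall>w\<in>set cl. set (F w) = desc w \<and> distinct (F w)"
  shows "distinct (concat (map F cl)) \<and> set (concat (map F cl)) = (\<Union>w\<in>set cl. desc w)"
  using assms
proof (induction cl)
  case Nil then show ?case by simp
next
  case (Cons a cl)
  have "desc a \<inter> (\<Union>w\<in>set cl. desc w) = {}"
    using desc_pair_disj Cons.prems by auto
  then show ?case using Cons by auto
qed

lemma v_notin_concat: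
  assumes "set cl \<subseteq> ch v" "\<forall>w\<in>set cl. set (F w) = desc w"
  shows "v \<notin> set (concat (map F cl))"
  using assms desc_notin by auto

lemma succ_concat_map:
  assumes "\<forall>w\<in>set cl. F w \<noteq> [] \<and> successively N3 (F w)"
    "\<forall>a\<in>set cl. \<forall>b\<in>set cl. N3 (last (F a)) (hd (F b))"
  shows "successively N3 (concat (map F cl))"
proof (rule successively_concat)
  show "\<forall>xs\<in>set (map F cl). xs \<noteq> [] \<and> successively N3 xs" using assms(1) by auto
  show "successively (\<lambda>xs ys. N3 (last xs) (hd ys)) (map F cl)"
    unfolding successively_map by (rule successively_all) (use assms(2) in auto)
qed

definition goodL :: "'x \<Rightarrow> 'x list \<Rightarrow> bool" where
  "goodL w L \<longleftrightarrow> set L = desc w \<and> distinct L \<and> successively N3 L \<and> L \<noteq> []"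

lemma consT:
  assumes v: "v \<in> X" and cl: "distinct cl" "set cl \<subseteq> ch v"
    and F: "\<forall>w\<in>set cl. goodL w (F w) \<and> last (F w) = w \<and> (w, hd (F w)) \<in> Tr"
  defines "L \<equiv> v # concat (map F cl)"
  shows "set L = insert v (\<Union>w\<in>set cl. desc w) \<and> distinct L \<and> successively N3 L \<and> hd L = v \<and> (v, last L) \<in> Tr"
proof -
  have F1: "\<forall>w\<in>set cl. set (F w) = desc w \<and> distinct (F w)" using F unfolding goodL_def by auto
  have cp: "distinct (concat (map F cl)) \<and> set (concat (map F cl)) = (\<Union>w\<in>set cl. desc w)"
    using concat_part[OF cl F1] .
  have nin: "v \<notin> set (concat (map F cl))" using v_notin_concat[OF cl(2)] F1 by auto
  have sc: "successively N3 (concat (map F cl))"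
  proof (rule succ_concat_map)
    show "\<forall>w\<in>set cl. F w \<noteq> [] \<and> successively N3 (F w)" using F unfolding goodL_def by auto
    show "\<forall>a\<in>set cl. \<forall>b\<in>set cl. N3 (last (F a)) (hd (F b))"
    proof (intro ballI)
      fix a b assume ab: "a \<in> set cl" "b \<in> set cl"
      then have "(a,v) \<in> Tr" "(v,b) \<in> Tr" "(b, hd (F b)) \<in> Tr" using Tr_ch cl F by auto
      then show "N3 (last (F a)) (hd (F b))" using F ab N3_I by metis
    qed
  qed
  show ?thesis
  proof (cases cl)
    case Nil then show ?thesis unfolding L_def using Tr_refl v by simp
  next
    case (Cons c cl')
    have ne: "\<forall>w\<in>set cl. F w \<noteq> []" using F unfolding goodL_def by auto
    have "hd (concat (map F cl)) = hd (F c)" using hd_concat_map[of cl F] ne Cons by simp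
    moreover have "(v, c) \<in> Tr" "(c, hd (F c)) \<in> Tr" using Cons Tr_ch cl F by auto
    ultimately have n1: "N3 v (hd (concat (map F cl)))" using N3_I2 by simp
    have "last L = last (F (last cl))" unfolding L_def using last_concat_map[of cl F] ne Cons by simp
    also have "\<dots> = last cl" using F Cons by simp
    finally have "(v, last L) \<in> Tr" using Tr_ch cl Cons by (metis last_in_set list.distinct(1) subsetD)
    moreover have "concat (map F cl) \<noteq> []" using ne Cons by simp
    ultimately show ?thesis unfolding L_def using cp nin sc n1 by (auto simp: successively_Cons)
  qed
qed

lemma consF:
  assumes v: "v \<in> X" and cl: "distinct cl" "set cl \<subseteq> ch v"
    and F: "\<forall>w\<in>set cl. goodL w (F w) \<and> hd (F w) = w \<and> (w, last (F w)) \<in> Tr"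
  defines "L \<equiv> concat (map F cl) @ [v]"
  shows "set L = insert v (\<Union>w\<in>set cl. desc w) \<and> distinct L \<and> successively N3 L \<and> last L = v \<and> (v, hd L) \<in> Tr"
proof -
  have F1: "\<forall>w\<in>set cl. set (F w) = desc w \<and> distinct (F w)" using F unfolding goodL_def by auto
  have cp: "distinct (concat (map F cl)) \<and> set (concat (map F cl)) = (\<Union>w\<in>set cl. desc w)"
    using concat_part[OF cl F1] .
  have nin: "v \<notin> set (concat (map F cl))" using v_notin_concat[OF cl(2)] F1 by auto
  have sc: "successively N3 (concat (map F cl))"
  proof (rule succ_concat_map)
    show "\<forall>w\<in>set cl. F w \<noteq> [] \<and> successively N3 (F w)" using F unfolding goodL_def by auto
    show "\<forall>a\<in>set cl. \<forall>b\<in>set cl. N3 (last (F a)) (hd (F b))"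
    proof (intro ballI)
      fix a b assume ab: "a \<in> set cl" "b \<in> set cl"
      then have "(last (F a), a) \<in> Tr" "(a,v) \<in> Tr" "(v,b) \<in> Tr" using Tr_ch cl F Tr_sym by auto
      then show "N3 (last (F a)) (hd (F b))" using F ab N3_I by metis
    qed
  qed
  show ?thesis
  proof (cases cl)
    case Nil then show ?thesis unfolding L_def using Tr_refl v by simp
  next
    case (Cons c cl')
    have ne: "\<forall>w\<in>set cl. F w \<noteq> []" using F unfolding goodL_def by auto
    have "hd L = hd (F c)" unfolding L_def using hd_concat_map[of cl F] ne Cons by simp
    also have "\<dots> = c" using F Cons by simp
    finally have h1: "(v, hd L) \<in> Tr" using Tr_ch cl Cons by auto
    have "last (concat (map F cl)) = last (F (last cl))" using last_concat_map[of cl F] ne Cons by simp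
    moreover have lc: "last cl \<in> set cl" using Cons by simp
    then have "(last (F (last cl)), last cl) \<in> Tr" "(last cl, v) \<in> Tr"
      using F Tr_ch cl Tr_sym by blast+
    ultimately have n1: "N3 (last (concat (map F cl))) v" using N3_I2 by simp
    moreover have "concat (map F cl) \<noteq> []" using ne Cons by simp
    ultimately show ?thesis using h1 unfolding L_def using cp nin sc by (auto simp: successively_append_iff)
  qed
qed

primrec sek :: "nat \<Rightarrow> bool \<Rightarrow> 'x \<Rightarrow> 'x list" where
  "sek 0 b v = [v]"
| "sek (Suc n) b v = (if b then v # concat (map (sek n False) (chl v))
      else concat (map (sek n True) (chl v)) @ [v])"

lemma sek_good:
  "v \<in> X \<Longrightarrow> finite (desc v) \<Longrightarrow> card (desc v) \<le> n \<Longrightarrow>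
   goodL v (sek n b v) \<and> (b \<longrightarrow> hd (sek n b v) = v \<and> (v, last (sek n b v)) \<in> Tr)
     \<and> (\<not> b \<longrightarrow> last (sek n b v) = v \<and> (v, hd (sek n b v)) \<in> Tr)"
proof (induction n arbitrary: v b)
  case 0
  then have "card (desc v) > 0" using desc_self card_gt_0_iff by blast
  then show ?case using 0 by simp
next
  case (Suc n)
  have cl: "distinct (chl v)" "set (chl v) \<subseteq> ch v" using chl Suc.prems by auto
  have ch_ok: "w \<in> X \<and> finite (desc w) \<and> card (desc w) \<le> n" if "w \<in> ch v" for w
    using desc_finite_card[OF Suc.prems(1,2) that] Suc.prems desc_sub[OF that] finite_subset ch_D that
    by fastforce
  have de: "desc v = insert v (\<Union>w\<in>set (chl v). desc w)" using desc_eq[OF Suc.prems(1)] chl Suc.prems by simp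
  show ?case
  proof (cases b)
    case True
    have "\<forall>w\<in>set (chl v). goodL w (sek n False w) \<and> last (sek n False w) = w \<and> (w, hd (sek n False w)) \<in> Tr"
    proof
      fix w assume "w \<in> set (chl v)"
      then have "w \<in> ch v" using cl by blast
      then have "w \<in> X" "finite (desc w)" "card (desc w) \<le> n" using ch_ok by auto
      from Suc.IH[OF this, of False] show "goodL w (sek n False w) \<and> last (sek n False w) = w \<and> (w, hd (sek n False w)) \<in> Tr" by simp
    qed
    from consT[OF Suc.prems(1) cl this] have "set (sek (Suc n) b v) = desc v" "distinct (sek (Suc n) b v)"
      "successively N3 (sek (Suc n) b v)" "hd (sek (Suc n) b v) = v" "(v, last (sek (Suc n) b v)) \<in> Tr"
      using True de by simp_all
    then show ?thesis using True unfolding goodL_def by auto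
  next
    case False
    have "\<forall>w\<in>set (chl v). goodL w (sek n True w) \<and> hd (sek n True w) = w \<and> (w, last (sek n True w)) \<in> Tr"
    proof
      fix w assume "w \<in> set (chl v)"
      then have "w \<in> ch v" using cl by blast
      then have "w \<in> X" "finite (desc w)" "card (desc w) \<le> n" using ch_ok by auto
      from Suc.IH[OF this, of True] show "goodL w (sek n True w) \<and> hd (sek n True w) = w \<and> (w, last (sek n True w)) \<in> Tr" by simp
    qed
    from consF[OF Suc.prems(1) cl this] have "set (sek (Suc n) b v) = desc v" "distinct (sek (Suc n) b v)"
      "successively N3 (sek (Suc n) b v)" "last (sek (Suc n) b v) = v" "(v, hd (sek (Suc n) b v)) \<in> Tr"
      using False de by simp_all
    then show ?thesis using False unfolding goodL_def by auto
  qed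
qed


definition fch :: "'x \<Rightarrow> 'x list" where
  "fch v = filter (\<lambda>w. finite (desc w)) (chl v)"

definition gl :: "'x \<Rightarrow> 'x list" where
  "gl w = sek (card (desc w)) False w"

definition Bl :: "'x \<Rightarrow> 'x list" where
  "Bl v = v # concat (map gl (fch v))"

definition nx :: "'x \<Rightarrow> 'x" where
  "nx v = (SOME w. w \<in> ch v \<and> core w)"

lemma gl_good: "w \<in> X \<Longrightarrow> finite (desc w) \<Longrightarrow> goodL w (gl w) \<and> last (gl w) = w \<and> (w, hd (gl w)) \<in> Tr"
  unfolding gl_def using sek_good[of w "card (desc w)" False] by simp

lemma Bl_props:
  assumes "core v"
  shows "set (Bl v) = insert v (\<Union>w\<in>{w\<in>ch v. finite (desc w)}. desc w) \<and> distinct (Bl v)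
    \<and> successively N3 (Bl v) \<and> hd (Bl v) = v \<and> (v, last (Bl v)) \<in> Tr \<and> Bl v \<noteq> []"
proof -
  have v: "v \<in> X" using assms unfolding core_def by simp
  have cl: "distinct (fch v)" "set (fch v) \<subseteq> ch v" using chl[OF v] unfolding fch_def by auto
  have sf: "set (fch v) = {w\<in>ch v. finite (desc w)}" using chl[OF v] unfolding fch_def by auto
  have "\<forall>w\<in>set (fch v). goodL w (gl w) \<and> last (gl w) = w \<and> (w, hd (gl w)) \<in> Tr"
  proof
    fix w assume "w \<in> set (fch v)"
    then have "w \<in> X" "finite (desc w)" using sf ch_D by auto
    then show "goodL w (gl w) \<and> last (gl w) = w \<and> (w, hd (gl w)) \<in> Tr" by (rule gl_good)
  qed
  from consT[OF v cl this] show ?thesis unfolding Bl_def[symmetric] using sf unfolding Bl_def by simp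
qed

lemma Bl_X: "core v \<Longrightarrow> set (Bl v) \<subseteq> X"
  using Bl_props[of v] desc_D unfolding core_def by auto

lemma Bl_anchor: "core a \<Longrightarrow> u \<in> set (Bl a) \<Longrightarrow> u = a \<or> (\<exists>w\<in>ch a. finite (desc w) \<and> u \<in> desc w)"
  using Bl_props[of a] by auto

lemma fin_desc_sub: "u \<in> desc w \<Longrightarrow> finite (desc w) \<Longrightarrow> finite (desc u)"
  using desc_trans finite_subset by (metis subsetI)

lemma Bl_disj:
  assumes a: "core a" and b: "core b" and ne: "a \<noteq> b"
  shows "set (Bl a) \<inter> set (Bl b) = {}"
proof (rule ccontr)
  assume "set (Bl a) \<inter> set (Bl b) \<noteq> {}"
  then obtain u where u: "u \<in> set (Bl a)" "u \<in> set (Bl b)" by blast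
  have na: "\<not> finite (desc a)" "\<not> finite (desc b)" using a b unfolding core_def by auto
  consider "u = a" "u = b" | "u = a" "\<exists>w\<in>ch b. finite (desc w) \<and> u \<in> desc w"
    | "u = b" "\<exists>w\<in>ch a. finite (desc w) \<and> u \<in> desc w"
    | "\<exists>w\<in>ch a. finite (desc w) \<and> u \<in> desc w" "\<exists>w\<in>ch b. finite (desc w) \<and> u \<in> desc w"
    using Bl_anchor[OF a u(1)] Bl_anchor[OF b u(2)] by blast
  then show False
  proof cases
    case 1 then show ?thesis using ne by simp
  next
    case 2 then show ?thesis using fin_desc_sub na by blast
  next
    case 3 then show ?thesis using fin_desc_sub na by blast
  next
    case 4
    then obtain w w' where w: "w \<in> ch a" "finite (desc w)" "u \<in> desc w"
      and w': "w' \<in> ch b" "finite (desc w')" "u \<in> desc w'" by blast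
    have key: "False" if "x \<in> ch c" "finite (desc x)" "u \<in> desc x" "y \<in> ch d" "u \<in> desc y"
      "dep x \<le> dep y" "\<not> finite (desc c)" "\<not> finite (desc d)" "c \<noteq> d" for x y c d
    proof -
      have "y \<in> desc x" using desc_comp[OF that(3) that(5) that(6)] .
      show False
      proof (cases "y = x")
        case True then show ?thesis using that ch_D by metis
      next
        case False
        then have "p y \<in> desc x" using desc_p \<open>y \<in> desc x\<close> by blast
        then have "d \<in> desc x" using that ch_D by metis
        then show ?thesis using fin_desc_sub that by blast
      qed
    qed
    show False
    proof (cases "dep w \<le> dep w'")
      case True then show ?thesis using key[OF w w'(1) w'(3)] na ne by blast
    next
      case False then show ?thesis using key[OF w' w(1) w(3)] na ne by fastforce
    qed
  qed
qed

lemma nx: "core v \<Longrightarrow> nx v \<in> ch v \<and> core (nx v)"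
  unfolding nx_def using core_ch by (metis (mono_tags, lifting) someI_ex)

lemma nx_D: "core v \<Longrightarrow> nx v \<in> X \<and> nx v \<noteq> r \<and> p (nx v) = v \<and> dep (nx v) = Suc (dep v) \<and> core (nx v)"
  using nx ch_D by blast

lemma nx_pow: "core s \<Longrightarrow> core ((nx ^^ j) s) \<and> dep ((nx ^^ j) s) = dep s + j"
  by (induction j) (auto simp: nx_D)

lemma p_nx_pow: "core s \<Longrightarrow> (p ^^ j) ((nx ^^ j) s) = s"
proof (induction j)
  case 0 then show ?case by simp
next
  case (Suc j)
  have "(p ^^ Suc j) ((nx ^^ Suc j) s) = (p ^^ j) (p (nx ((nx ^^ j) s)))"
  proof -
    have "(nx ^^ Suc j) s = nx ((nx ^^ j) s)" by simp
    moreover have "(p ^^ Suc j) x = (p ^^ j) (p x)" for x by (simp only: funpow_Suc_right o_apply)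
    ultimately show ?thesis by simp
  qed
  also have "\<dots> = (p ^^ j) ((nx ^^ j) s)" using nx_D nx_pow Suc.prems by simp
  finally show ?case using Suc by simp
qed


definition St :: "'x set" where
  "St = {s. core s \<and> (s = r \<or> nx (p s) \<noteq> s)}"

definition pre :: "'x \<Rightarrow> nat \<Rightarrow> 'x list" where
  "pre s k = concat (map (\<lambda>j. Bl ((nx ^^ j) s)) [0..<k])"

definition seq :: "'x \<Rightarrow> nat \<Rightarrow> 'x" where
  "seq s i = pre s (Suc i) ! i"

lemma pre_0: "pre s 0 = []" unfolding pre_def by simp

lemma pre_Suc: "pre s (Suc k) = pre s k @ Bl ((nx ^^ k) s)"
  unfolding pre_def by simp

lemma pre_set: "set (pre s k) = (\<Union>j<k. set (Bl ((nx ^^ j) s)))"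
  by (induction k) (auto simp: pre_0 pre_Suc lessThan_Suc)

lemma pre_len: "core s \<Longrightarrow> k \<le> length (pre s k)"
proof (induction k)
  case 0 then show ?case by simp
next
  case (Suc k)
  have "Bl ((nx ^^ k) s) \<noteq> []" using Bl_props nx_pow Suc.prems by blast
  then have "length (Bl ((nx ^^ k) s)) \<ge> 1" by (cases "Bl ((nx ^^ k) s)") auto
  then show ?case using Suc by (simp add: pre_Suc)
qed

lemma pre_distinct: "core s \<Longrightarrow> distinct (pre s k)"
proof (induction k)
  case 0 then show ?case by (simp add: pre_0)
next
  case (Suc k)
  have "set (pre s k) \<inter> set (Bl ((nx ^^ k) s)) = {}"
  proof -
    have "set (Bl ((nx ^^ j) s)) \<inter> set (Bl ((nx ^^ k) s)) = {}" if "j < k" for j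
    proof (rule Bl_disj)
      show "core ((nx ^^ j) s)" "core ((nx ^^ k) s)" using nx_pow Suc.prems by auto
      show "(nx ^^ j) s \<noteq> (nx ^^ k) s" using nx_pow[OF Suc.prems, of j] nx_pow[OF Suc.prems, of k] that
        by auto
    qed
    then show ?thesis unfolding pre_set by blast
  qed
  moreover have "distinct (Bl ((nx ^^ k) s))" using Bl_props nx_pow Suc.prems by blast
  ultimately show ?case using Suc by (simp add: pre_Suc)
qed

lemma pre_prefix: "\<exists>ys. pre s (k + d) = pre s k @ ys"
proof (induction d)
  case 0 then show ?case by simp
next
  case (Suc d)
  then obtain ys where "pre s (k + d) = pre s k @ ys" by blast
  then show ?case by (simp add: pre_Suc)
qed

lemma pre_nth: "k \<le> k' \<Longrightarrow> i < length (pre s k) \<Longrightarrow> pre s k' ! i = pre s k ! i"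
proof -
  assume a: "k \<le> k'" "i < length (pre s k)"
  obtain ys where "pre s (k + (k' - k)) = pre s k @ ys" using pre_prefix by blast
  then have "pre s k' = pre s k @ ys" using a by simp
  then show ?thesis using a by (simp add: nth_append)
qed

lemma seq_eq: "core s \<Longrightarrow> i < length (pre s k) \<Longrightarrow> seq s i = pre s k ! i"
proof -
  assume a: "core s" "i < length (pre s k)"
  have l: "i < length (pre s (Suc i))" using pre_len[OF a(1), of "Suc i"] by simp
  show ?thesis
  proof (cases "k \<le> Suc i")
    case True then show ?thesis unfolding seq_def using pre_nth[OF True a(2)] by simp
  next
    case False then show ?thesis unfolding seq_def using pre_nth[of "Suc i" k i s] l by simp
  qed
qed

lemma pre_succ: "core s \<Longrightarrow> successively N3 (pre s k)"
proof (induction k)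
  case 0 then show ?case by (simp add: pre_0)
next
  case (Suc k)
  have B: "successively N3 (Bl ((nx ^^ k) s))" "Bl ((nx ^^ k) s) \<noteq> []" "hd (Bl ((nx ^^ k) s)) = (nx ^^ k) s"
    using Bl_props nx_pow Suc.prems by blast+
  show ?case
  proof (cases k)
    case 0 then show ?thesis using B by (simp add: pre_Suc pre_0)
  next
    case (Suc k')
    let ?a = "(nx ^^ k') s"
    have ca: "core ?a" using nx_pow \<open>core s\<close> by blast
    have ne: "Bl ?a \<noteq> []" using Bl_props ca by blast
    have l: "last (pre s k) = last (Bl ?a)" using ne by (simp add: Suc pre_Suc)
    have "(last (Bl ?a), ?a) \<in> Tr" using Bl_props[OF ca] Tr_sym by blast
    moreover have "(?a, nx ?a) \<in> Tr" using nx[OF ca] Tr_ch by blast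
    ultimately have "N3 (last (pre s k)) (hd (Bl ((nx ^^ k) s)))" using l B(3) Suc N3_I2 by simp
    moreover have "pre s k \<noteq> []" using pre_len[OF \<open>core s\<close>, of k] Suc by auto
    ultimately show ?thesis using Suc.IH Suc.prems B by (simp add: pre_Suc successively_append_iff)
  qed
qed

lemma seq_N3: "core s \<Longrightarrow> N3 (seq s i) (seq s (Suc i))"
proof -
  assume c: "core s"
  have l: "Suc i < length (pre s (Suc (Suc i)))" using pre_len[OF c, of "Suc (Suc i)"] by simp
  have "N3 (pre s (Suc (Suc i)) ! i) (pre s (Suc (Suc i)) ! Suc i)"
    using successively_nth[OF pre_succ[OF c] l] .
  moreover have "seq s i = pre s (Suc (Suc i)) ! i" using seq_eq[OF c] l by simp
  moreover have "seq s (Suc i) = pre s (Suc (Suc i)) ! Suc i" using seq_eq[OF c] l by simp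
  ultimately show ?thesis by simp
qed

lemma seq_in_pre: "core s \<Longrightarrow> seq s i \<in> set (pre s (Suc i))"
  unfolding seq_def using pre_len[of s "Suc i"] by simp

lemma seq_X: "core s \<Longrightarrow> seq s i \<in> X"
  using seq_in_pre[of s i] unfolding pre_set using Bl_X nx_pow by blast

lemma seq_inj: "core s \<Longrightarrow> seq s i = seq s i' \<Longrightarrow> i = i'"
proof -
  assume a: "core s" "seq s i = seq s i'"
  let ?k = "Suc (max i i')"
  have l: "i < length (pre s ?k)" "i' < length (pre s ?k)" using pre_len[OF a(1), of ?k] by auto
  then have "pre s ?k ! i = pre s ?k ! i'" using a seq_eq by simp
  then show ?thesis using pre_distinct[OF a(1)] l nth_eq_iff_index_eq by blast
qed

lemma starts_eq_aux:
  assumes s: "s \<in> St" and s': "s' \<in> St" and eq: "(nx ^^ j) s = (nx ^^ j') s'" and le: "j \<le> j'"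
  shows "s = s' \<and> j = j'"
proof -
  have cs: "core s" "core s'" using s s' unfolding St_def by auto
  let ?q = "(nx ^^ (j' - j)) s'"
  have cq: "core ?q" using nx_pow cs by blast
  have "(nx ^^ j') s' = (nx ^^ j) ?q"
  proof -
    have "(nx ^^ j') s' = (nx ^^ (j + (j' - j))) s'" using le by simp
    also have "\<dots> = (nx ^^ j) ((nx ^^ (j' - j)) s')" by (simp only: funpow_add o_apply)
    finally show ?thesis .
  qed
  then have "(nx ^^ j) s = (nx ^^ j) ?q" using eq by simp
  then have "(p ^^ j) ((nx ^^ j) s) = (p ^^ j) ((nx ^^ j) ?q)" by simp
  then have "s = ?q" using p_nx_pow[OF cs(1), of j] p_nx_pow[OF cq, of j] by simp
  show ?thesis
  proof (cases "j' - j")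
    case 0 then show ?thesis using \<open>s = ?q\<close> le by simp
  next
    case (Suc m)
    let ?a = "(nx ^^ m) s'"
    have ca: "core ?a" using nx_pow cs by blast
    have "s = nx ?a" using \<open>s = ?q\<close> Suc by simp
    then have "s \<noteq> r" "p s = ?a" using nx_D[OF ca] by auto
    then have "nx (p s) = s" using \<open>s = nx ?a\<close> by simp
    then show ?thesis using s \<open>s \<noteq> r\<close> unfolding St_def by simp
  qed
qed

lemma starts_eq: "s \<in> St \<Longrightarrow> s' \<in> St \<Longrightarrow> (nx ^^ j) s = (nx ^^ j') s' \<Longrightarrow> s = s' \<and> j = j'"
  using starts_eq_aux by (metis nat_le_linear)

lemma seq_unique:
  assumes s: "s \<in> St" and s': "s' \<in> St" and eq: "seq s i = seq s' i'"
  shows "s = s' \<and> i = i'"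
proof -
  have cs: "core s" "core s'" using s s' unfolding St_def by auto
  obtain j where j: "seq s i \<in> set (Bl ((nx ^^ j) s))" using seq_in_pre[OF cs(1), of i] unfolding pre_set by blast
  obtain j' where j': "seq s' i' \<in> set (Bl ((nx ^^ j') s'))" using seq_in_pre[OF cs(2), of i'] unfolding pre_set by blast
  have "(nx ^^ j) s = (nx ^^ j') s'"
  proof (rule ccontr)
    assume "(nx ^^ j) s \<noteq> (nx ^^ j') s'"
    moreover have "core ((nx ^^ j) s)" "core ((nx ^^ j') s')" using nx_pow cs by auto
    ultimately have "set (Bl ((nx ^^ j) s)) \<inter> set (Bl ((nx ^^ j') s')) = {}"
      using Bl_disj by simp
    moreover have "seq s i \<in> set (Bl ((nx ^^ j) s)) \<inter> set (Bl ((nx ^^ j') s'))" using j j' eq by simp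
    ultimately show False by simp
  qed
  then have "s = s'" using starts_eq[OF s s'] by simp
  then show ?thesis using seq_inj[OF cs(1)] eq by simp
qed

lemma anchor_aux: "u \<in> X \<Longrightarrow> \<not> core u \<Longrightarrow> \<exists>a w. core a \<and> w \<in> ch a \<and> finite (desc w) \<and> u \<in> desc w"
proof (induction "dep u" arbitrary: u rule: less_induct)
  case less
  have ur: "u \<noteq> r" using less.prems core_r by auto
  then have pu: "p u \<in> X" "Suc (dep (p u)) = dep u" using par less.prems by auto
  have uch: "u \<in> ch (p u)" unfolding ch_def using less.prems ur by simp
  have fu: "finite (desc u)" using less.prems unfolding core_def by simp
  show ?case
  proof (cases "core (p u)")
    case True then show ?thesis using uch fu desc_self less.prems by blast
  next
    case False
    then obtain a w where aw: "core a" "w \<in> ch a" "finite (desc w)" "p u \<in> desc w"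
      using less.hyps[of "p u"] pu by auto
    have "u \<in> desc w" using desc_trans[OF desc_ch[OF uch] aw(4)] .
    then show ?thesis using aw by blast
  qed
qed

lemma anchor: "u \<in> X \<Longrightarrow> \<exists>a. core a \<and> u \<in> set (Bl a)"
proof -
  assume u: "u \<in> X"
  show ?thesis
  proof (cases "core u")
    case True then show ?thesis using Bl_props[OF True] by (metis list.set_sel(1))
  next
    case False
    then obtain a w where "core a" "w \<in> ch a" "finite (desc w)" "u \<in> desc w" using anchor_aux u by blast
    then show ?thesis using Bl_props[of a] by blast
  qed
qed

lemma core_start: "core a \<Longrightarrow> \<exists>s\<in>St. \<exists>j. (nx ^^ j) s = a"
proof (induction "dep a" arbitrary: a rule: less_induct)
  case less
  show ?case
  proof (cases "a \<in> St")
    case True then show ?thesis by (metis funpow_0)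
  next
    case False
    then have ar: "a \<noteq> r" and na: "nx (p a) = a" using less.prems unfolding St_def by auto
    have aX: "a \<in> X" using less.prems unfolding core_def by simp
    then have pa: "p a \<in> X" "Suc (dep (p a)) = dep a" using par ar by auto
    have "a \<in> ch (p a)" unfolding ch_def using aX ar by simp
    then have "core (p a)" using core_anc desc_ch less.prems by blast
    then obtain s j where "s \<in> St" "(nx ^^ j) s = p a" using less.hyps[of "p a"] pa by auto
    then have "(nx ^^ Suc j) s = a" using na by simp
    then show ?thesis using \<open>s \<in> St\<close> by blast
  qed
qed

lemma cover: "u \<in> X \<Longrightarrow> \<exists>s\<in>St. \<exists>i. seq s i = u"
proof -
  assume u: "u \<in> X"
  obtain a where a: "core a" "u \<in> set (Bl a)" using anchor[OF u] by blast
  obtain s j where sj: "s \<in> St" "(nx ^^ j) s = a" using core_start[OF a(1)] by blast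
  have cs: "core s" using sj unfolding St_def by simp
  have "u \<in> set (pre s (Suc j))" unfolding pre_set using a sj by blast
  then obtain i where "i < length (pre s (Suc j))" "pre s (Suc j) ! i = u" by (metis in_set_conv_nth)
  then have "seq s i = u" using seq_eq[OF cs] by simp
  then show ?thesis using sj by blast
qed

lemma seq_path: "core s \<Longrightarrow> (seq s i, seq s (i + d)) \<in> Tr ^^ (3 * d)"
proof (induction d)
  case 0 then show ?case by simp
next
  case (Suc d)
  have "(seq s (i + d), seq s (Suc (i + d))) \<in> Tr ^^ 3" using seq_N3[OF Suc.prems] unfolding N3_def .
  then have "(seq s i, seq s (Suc (i + d))) \<in> Tr ^^ (3 * d + 3)" using Suc relpow_trans by fast
  moreover have "3 * d + 3 = 3 * Suc d" by simp
  ultimately show ?case by (metis add_Suc_right)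
qed

definition blk :: "nat \<Rightarrow> 'x \<Rightarrow> nat \<Rightarrow> 'x set" where
  "blk c s t = seq s ` {t * c..<Suc t * c}"

lemma blk_diam:
  assumes c: "core s" and x: "x \<in> blk c s t" and y: "y \<in> blk c s t"
  shows "(x,y) \<in> Tr ^^ (3 * c)"
proof -
  obtain i j where ij: "x = seq s i" "y = seq s j" "t*c \<le> i" "i < Suc t * c" "t*c \<le> j" "j < Suc t * c"
    using x y unfolding blk_def by auto
  have gen: "(seq s a, seq s b) \<in> Tr ^^ (3 * c)" if "a \<le> b" "b < a + c" for a b
  proof -
    have "(seq s a, seq s (a + (b - a))) \<in> Tr ^^ (3 * (b - a))" using seq_path[OF c] .
    then have "(seq s a, seq s b) \<in> Tr ^^ (3 * (b - a))" using that by simp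
    moreover have "(seq s b, seq s b) \<in> Tr" using Tr_refl seq_X[OF c] by blast
    moreover have "3 * (b - a) \<le> 3 * c" using that by simp
    ultimately show ?thesis by (rule relpow_pad)
  qed
  show ?thesis
  proof (cases "i \<le> j")
    case True
    moreover have "j < i + c" using ij by simp
    ultimately have "(seq s i, seq s j) \<in> Tr ^^ (3 * c)" by (rule gen)
    then show ?thesis using ij(1,2) by simp
  next
    case False
    then have "j \<le> i" by simp
    moreover have "i < j + c" using ij by simp
    ultimately have "(seq s j, seq s i) \<in> Tr ^^ (3 * c)" by (rule gen)
    then have "(y,x) \<in> Tr ^^ (3 * c)" using ij(1,2) by simp
    then show ?thesis using relpow_sym[of Tr] Tr_sym by metis
  qed
qed

theorem tree_partition:
  "\<exists>P. finite P \<and> r \<in> P \<and> P \<subseteq> X \<and> {w \<in> ch r. ch w = {}} \<subseteq> P \<and>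
    (\<forall>c. card P \<le> c \<longrightarrow> (\<exists>Q. (\<forall>B\<in>Q. B \<subseteq> X \<and> card B = c \<and> (\<forall>x\<in>B. \<forall>y\<in>B. (x,y) \<in> Tr ^^ (3 * c)))
        \<and> (\<forall>u\<in>X. \<exists>!B. B \<in> Q \<and> u \<in> B) \<and> (\<exists>B\<in>Q. P \<subseteq> B)))"
proof (rule exI[of _ "set (Bl r)"], intro conjI allI impI)
  let ?P = "set (Bl r)"
  have BP: "distinct (Bl r)" "hd (Bl r) = r" "Bl r \<noteq> []" using Bl_props core_r by blast+
  show "finite ?P" by simp
  show "r \<in> ?P" using BP by (metis list.set_sel(1))
  show "?P \<subseteq> X" using Bl_X core_r by blast
  show "{w \<in> ch r. ch w = {}} \<subseteq> ?P"
  proof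
    fix w assume w: "w \<in> {w \<in> ch r. ch w = {}}"
    then have "desc w = {w}" using desc_eq ch_D by auto
    then show "w \<in> ?P" using w Bl_props[OF core_r] by auto
  qed
  fix c assume cP: "card ?P \<le> c"
  have len: "length (Bl r) \<le> c" using cP distinct_card[OF BP(1)] by simp
  have c1: "1 \<le> c" using len BP(3) by (cases "Bl r") auto
  let ?Q = "{blk c s t | s t. s \<in> St}"
  show "\<exists>Q. (\<forall>B\<in>Q. B \<subseteq> X \<and> card B = c \<and> (\<forall>x\<in>B. \<forall>y\<in>B. (x,y) \<in> Tr ^^ (3 * c)))
        \<and> (\<forall>u\<in>X. \<exists>!B. B \<in> Q \<and> u \<in> B) \<and> (\<exists>B\<in>Q. ?P \<subseteq> B)"
  proof (intro exI conjI)
    show "\<forall>B\<in>?Q. B \<subseteq> X \<and> card B = c \<and> (\<forall>x\<in>B. \<forall>y\<in>B. (x,y) \<in> Tr ^^ (3 * c))"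
    proof
      fix B assume "B \<in> ?Q"
      then obtain s t where st: "s \<in> St" "B = blk c s t" by blast
      have cs: "core s" using st unfolding St_def by simp
      have "inj_on (seq s) {t * c..<Suc t * c}" using seq_inj[OF cs] by (meson inj_onI)
      then have "card B = c" unfolding st blk_def by (simp add: card_image)
      moreover have "B \<subseteq> X" unfolding st blk_def using seq_X[OF cs] by auto
      ultimately show "B \<subseteq> X \<and> card B = c \<and> (\<forall>x\<in>B. \<forall>y\<in>B. (x,y) \<in> Tr ^^ (3 * c))"
        using blk_diam[OF cs] st by blast
    qed
    show "\<forall>u\<in>X. \<exists>!B. B \<in> ?Q \<and> u \<in> B"
    proof
      fix u assume u: "u \<in> X"
      obtain s i where si: "s \<in> St" "seq s i = u" using cover[OF u] by blast
      have "i \<in> {i div c * c..<Suc (i div c) * c}" using c1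
        by (simp add: dividend_less_div_times)
      then have ex: "u \<in> blk c s (i div c)" unfolding blk_def using si by blast
      show "\<exists>!B. B \<in> ?Q \<and> u \<in> B"
      proof (rule ex1I[of _ "blk c s (i div c)"])
        show "blk c s (i div c) \<in> ?Q \<and> u \<in> blk c s (i div c)" using ex si by blast
        fix B assume B: "B \<in> ?Q \<and> u \<in> B"
        then obtain s' t' where st': "s' \<in> St" "B = blk c s' t'" by blast
        then obtain i' where i': "u = seq s' i'" "t' * c \<le> i'" "i' < Suc t' * c" using B unfolding blk_def by auto
        have "seq s' i' = seq s i" using i' si by simp
        then have "s' = s" "i' = i" using seq_unique[OF st'(1) si(1)] by auto
        then have "t' = i div c" using i' c1 by (metis Suc_eq_plus1 div_nat_eqI mult.commute)
        then show "B = blk c s (i div c)" using st' \<open>s' = s\<close> by simp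
      qed
    qed
    show "\<exists>B\<in>?Q. ?P \<subseteq> B"
    proof (intro bexI)
      show "blk c r 0 \<in> ?Q" using core_r unfolding St_def by blast
      show "?P \<subseteq> blk c r 0"
      proof
        fix u assume "u \<in> ?P"
        then obtain i where i: "i < length (Bl r)" "Bl r ! i = u" by (metis in_set_conv_nth)
        have p1: "pre r 1 = Bl r" unfolding pre_def by simp
        have "seq r i = u" using seq_eq[OF core_r, of i 1] p1 i by simp
        then show "u \<in> blk c r 0" unfolding blk_def using i len by auto
      qed
    qed
  qed
qed

end


locale gset = group G for G (structure) +
  fixes U
  assumes U_sub: "U \<subseteq> carrier G" and U_fin: "finite U" and U_one: "\<one> \<in> U"
    and U_inv: "\<And>u. u \<in> U \<Longrightarrow> inv u \<in> U"
begin

definition E :: "('a \<times> 'a) set" where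
  "E = {(x,y). x \<in> carrier G \<and> y \<in> carrier G \<and> inv x \<otimes> y \<in> U}"

lemma E_refl: "x \<in> carrier G \<Longrightarrow> (x,x) \<in> E"
  unfolding E_def using U_one by simp

lemma E_sym: "(x,y) \<in> E \<Longrightarrow> (y,x) \<in> E"
proof -
  assume a: "(x,y) \<in> E"
  then have c: "x \<in> carrier G" "y \<in> carrier G" "inv x \<otimes> y \<in> U" unfolding E_def by auto
  have "inv (inv x \<otimes> y) = inv y \<otimes> x" using c by (simp add: inv_mult_group)
  then show ?thesis using U_inv[OF c(3)] c unfolding E_def by simp
qed

lemma E_carrier: "(x,y) \<in> E \<Longrightarrow> x \<in> carrier G \<and> y \<in> carrier G"
  unfolding E_def by auto

lemma Epow_carrier: "(x,y) \<in> E ^^ k \<Longrightarrow> x \<in> carrier G \<Longrightarrow> y \<in> carrier G"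
proof (induction k arbitrary: y)
  case 0 then show ?case by simp
next
  case (Suc k)
  then obtain z where "(x,z) \<in> E ^^ k" "(z,y) \<in> E" by (auto elim: relpow_Suc_E)
  then show ?case using E_carrier by blast
qed

lemma E_refl_pow: "x \<in> carrier G \<Longrightarrow> (x,y) \<in> E ^^ a \<Longrightarrow> a \<le> b \<Longrightarrow> (x,y) \<in> E ^^ b"
  using relpow_pad E_refl Epow_carrier by metis

lemma E_transl: "(x,y) \<in> E \<Longrightarrow> z \<in> carrier G \<Longrightarrow> (z \<otimes> x, z \<otimes> y) \<in> E"
proof -
  assume a: "(x,y) \<in> E" "z \<in> carrier G"
  then have c: "x \<in> carrier G" "y \<in> carrier G" "inv x \<otimes> y \<in> U" unfolding E_def by auto
  have "inv (z \<otimes> x) \<otimes> (z \<otimes> y) = inv x \<otimes> y" using c a(2)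
    by (simp add: inv_mult_group m_assoc[symmetric]) (simp add: m_assoc[symmetric] l_inv  m_assoc)
  then show ?thesis using c a(2) unfolding E_def by simp
qed

lemma Epow_transl: "(x,y) \<in> E ^^ k \<Longrightarrow> z \<in> carrier G \<Longrightarrow> (z \<otimes> x, z \<otimes> y) \<in> E ^^ k"
proof (induction k arbitrary: y)
  case 0 then show ?case by simp
next
  case (Suc k)
  then obtain w where "(x,w) \<in> E ^^ k" "(w,y) \<in> E" by (auto elim: relpow_Suc_E)
  then show ?case using Suc E_transl by (meson relpow_Suc_I)
qed

definition ball :: "nat \<Rightarrow> 'a set" where
  "ball k = {y. (\<one>, y) \<in> E ^^ k}"

lemma ball_finite_gen: "x \<in> carrier G \<Longrightarrow> finite {y. (x,y) \<in> E ^^ k}"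
proof (induction k)
  case 0 then show ?case by simp
next
  case (Suc k)
  have "{y. (x,y) \<in> E ^^ Suc k} \<subseteq> (\<lambda>(z,u). z \<otimes> u) ` ({z. (x,z) \<in> E ^^ k} \<times> U)"
  proof
    fix y assume "y \<in> {y. (x,y) \<in> E ^^ Suc k}"
    then obtain z where z: "(x,z) \<in> E ^^ k" "(z,y) \<in> E" by (auto elim: relpow_Suc_E)
    then have c: "z \<in> carrier G" "y \<in> carrier G" "inv z \<otimes> y \<in> U" unfolding E_def by auto
    have "y = z \<otimes> (inv z \<otimes> y)" using c by (simp add: m_assoc[symmetric])
    then show "y \<in> (\<lambda>(z,u). z \<otimes> u) ` ({z. (x,z) \<in> E ^^ k} \<times> U)" using z c by force
  qed
  moreover have "finite ({z. (x,z) \<in> E ^^ k} \<times> U)" using Suc U_fin by simp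
  ultimately show ?case using finite_subset by blast
qed

lemma ball_finite: "finite (ball k)"
  unfolding ball_def using ball_finite_gen by simp

lemma gen_reach: "g \<in> generate G S \<Longrightarrow> S \<subseteq> U \<Longrightarrow> \<exists>k. (\<one>, g) \<in> E ^^ k"
proof (induction rule: generate.induct)
  case one then show ?case by (meson relpow_0_I)
next
  case (incl h)
  then have "h \<in> U" "h \<in> carrier G" using U_sub by auto
  then have "(\<one>, h) \<in> E" unfolding E_def by simp
  then show ?case by (metis relpow_1)
next
  case (inv h)
  then have "inv h \<in> U" using U_inv by auto
  then have "inv h \<in> U" "inv h \<in> carrier G" using U_sub by auto
  then have "(\<one>, inv h) \<in> E" unfolding E_def by simp
  then show ?case by (metis relpow_1)
next
  case (eng g h)
  then obtain a b where ab: "(\<one>, g) \<in> E ^^ a" "(\<one>, h) \<in> E ^^ b" by blast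
  have gc: "g \<in> carrier G" using Epow_carrier[OF ab(1)] by simp
  have "(g \<otimes> \<one>, g \<otimes> h) \<in> E ^^ b" using Epow_transl[OF ab(2) gc] .
  then have "(g, g \<otimes> h) \<in> E ^^ b" using gc by simp
  then show ?case using ab(1) relpow_trans by fast
qed


definition lvl :: "'a set set \<Rightarrow> nat \<Rightarrow> nat \<Rightarrow> bool" where
  "lvl P m D \<longleftrightarrow> 1 \<le> m \<and> (\<forall>A\<in>P. A \<subseteq> carrier G \<and> card A = m \<and> (\<forall>x\<in>A. \<forall>y\<in>A. (x,y) \<in> E ^^ D))
     \<and> (\<forall>g\<in>carrier G. \<exists>!A. A \<in> P \<and> g \<in> A)"

lemma lcos_img: "a <# A = (\<lambda>h. a \<otimes> h) ` A"
  unfolding l_coset_def by auto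

lemma lcos_card: "a \<in> carrier G \<Longrightarrow> A \<subseteq> carrier G \<Longrightarrow> card (a <# A) = card A"
proof -
  assume a: "a \<in> carrier G" "A \<subseteq> carrier G"
  have "inj_on (\<lambda>h. a \<otimes> h) A"
  proof (rule inj_onI)
    fix x y assume "x \<in> A" "y \<in> A" "a \<otimes> x = a \<otimes> y"
    moreover have "x \<in> carrier G" "y \<in> carrier G" using a calculation by auto
    ultimately show "x = y" using a Units_l_cancel[of a x y] Units_eq by simp
  qed
  then show ?thesis unfolding lcos_img by (rule card_image)
qed

lemma lcos_sub: "a \<in> carrier G \<Longrightarrow> A \<subseteq> carrier G \<Longrightarrow> a <# A \<subseteq> carrier G"
  unfolding lcos_img by auto

lemma lcos_back: "a \<in> carrier G \<Longrightarrow> A \<subseteq> carrier G \<Longrightarrow> a <# (inv a <# A) = A"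
  by (simp add: lcos_m_assoc lcos_mult_one)

lemma lvl_block: "lvl P m D \<Longrightarrow> A \<in> P \<Longrightarrow> A \<subseteq> carrier G \<and> card A = m \<and> finite A \<and> A \<noteq> {}
   \<and> (\<forall>x\<in>A. \<forall>y\<in>A. (x,y) \<in> E ^^ D)"
  unfolding lvl_def by (metis card.empty card.infinite not_one_le_zero)

lemma lvl_uniq: "lvl P m D \<Longrightarrow> A \<in> P \<Longrightarrow> B \<in> P \<Longrightarrow> g \<in> A \<Longrightarrow> g \<in> B \<Longrightarrow> A = B"
proof -
  assume a: "lvl P m D" "A \<in> P" "B \<in> P" "g \<in> A" "g \<in> B"
  have s: "\<forall>A\<in>P. A \<subseteq> carrier G" and u: "\<forall>g\<in>carrier G. \<exists>!A. A \<in> P \<and> g \<in> A"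
    using a(1) unfolding lvl_def by auto
  have "g \<in> carrier G" using s a(2,4) by blast
  then have "\<exists>!A. A \<in> P \<and> g \<in> A" using u by simp
  then show "A = B" using a(2-5) by (metis (no_types, lifting))
qed

lemma tiling:
  assumes L: "lvl P m D" and A0: "A0 \<in> P" "\<one> \<in> A0"
  shows "\<exists>k \<Delta> T. fair_polytiling G k \<Delta> T \<and> induced_partition G k \<Delta> T = P \<and> \<one> \<in> \<Delta> 0 \<and> T 0 = A0"
proof -
  define ctr where "ctr A = (if \<one> \<in> A then \<one> else (SOME x. x \<in> A))" for A
  have ctr: "ctr A \<in> A" if "A \<in> P" for A
    using lvl_block[OF L that] unfolding ctr_def by (auto intro: someI_ex)
  have ctrc: "ctr A \<in> carrier G" if "A \<in> P" for A using ctr[OF that] lvl_block[OF L that] by auto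
  define sh where "sh A = inv (ctr A) <# A" for A
  have sh_back: "ctr A <# sh A = A" if "A \<in> P" for A
    unfolding sh_def using lcos_back ctrc[OF that] lvl_block[OF L that] by simp
  have sh_card: "card (sh A) = m" if "A \<in> P" for A
    unfolding sh_def using lcos_card ctrc[OF that] lvl_block[OF L that] by simp
  have sh_sub: "sh A \<subseteq> carrier G" if "A \<in> P" for A
    unfolding sh_def using lcos_sub ctrc[OF that] lvl_block[OF L that] by simp
  have sh_one: "\<one> \<in> sh A" if "A \<in> P" for A
  proof -
    have "inv (ctr A) \<otimes> ctr A = \<one>" using ctrc[OF that] by simp
    then show ?thesis unfolding sh_def lcos_img using ctr[OF that] by (metis image_eqI)
  qed
  have sh_ball: "sh A \<subseteq> ball D" if "A \<in> P" for A
  proof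
    fix y assume "y \<in> sh A"
    then obtain a where a: "a \<in> A" "y = inv (ctr A) \<otimes> a" unfolding sh_def lcos_img by auto
    have "(ctr A, a) \<in> E ^^ D" using lvl_block[OF L that] ctr[OF that] a by blast
    moreover have "inv (ctr A) \<in> carrier G" using ctrc[OF that] by simp
    ultimately have "(inv (ctr A) \<otimes> ctr A, inv (ctr A) \<otimes> a) \<in> E ^^ D" by (rule Epow_transl)
    then show "y \<in> ball D" unfolding ball_def using a ctrc[OF that] by simp
  qed
  have sh_fin: "finite (sh A)" if "A \<in> P" for A using sh_ball[OF that] ball_finite finite_subset by blast
  have shA0: "sh A0 = A0" unfolding sh_def ctr_def using A0 lvl_block[OF L A0(1)] lcos_mult_one by simp
  define Sh where "Sh = sh ` P"
  have "Sh \<subseteq> Pow (ball D)" unfolding Sh_def using sh_ball by auto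
  then have fSh: "finite Sh" using ball_finite finite_subset by blast
  obtain xs where xs: "distinct xs" "set xs = Sh - {A0}" using finite_distinct_list[of "Sh - {A0}"] fSh by auto
  define Ls where "Ls = A0 # xs"
  have dL: "distinct Ls" and sL: "set Ls = Sh" unfolding Ls_def using xs shA0 A0 Sh_def by auto
  define k where "k = length Ls"
  define T where "T i = Ls ! i" for i
  define \<Delta> where "\<Delta> i = {ctr A | A. A \<in> P \<and> sh A = Ls ! i}" for i
  have inSh: "i < k \<Longrightarrow> \<exists>A\<in>P. Ls ! i = sh A" for i using sL unfolding k_def Sh_def by (metis image_iff nth_mem)
  have idx: "A \<in> P \<Longrightarrow> \<exists>i<k. Ls ! i = sh A" for A
    using sL unfolding k_def Sh_def by (metis image_eqI in_set_conv_nth)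
  have key: "\<exists>B\<in>P. ctr B = \<delta> \<and> sh B = Ls ! i \<and> \<delta> <# T i = B" if d: "\<delta> \<in> \<Delta> i" for i \<delta>
  proof -
    obtain B where B: "B \<in> P" "sh B = Ls ! i" "\<delta> = ctr B" using d unfolding \<Delta>_def by blast
    then have "\<delta> <# T i = B" unfolding T_def using sh_back[OF B(1)] by simp
    then show ?thesis using B by (intro bexI[of _ B]) auto
  qed
  have part: "\<forall>g\<in>carrier G. \<exists>!(i, \<delta>). i < k \<and> \<delta> \<in> \<Delta> i \<and> g \<in> \<delta> <# T i"
  proof
    fix g assume g: "g \<in> carrier G"
    have "\<forall>g\<in>carrier G. \<exists>!A. A \<in> P \<and> g \<in> A" using L unfolding lvl_def by simp
    then obtain A where A: "A \<in> P" "g \<in> A" using g by metis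
    obtain i where i: "i < k" "Ls ! i = sh A" using idx[OF A(1)] by blast
    have dA: "ctr A \<in> \<Delta> i" unfolding \<Delta>_def using A i by auto
    have gA: "g \<in> ctr A <# T i" unfolding T_def using i sh_back A by simp
    show "\<exists>!(i, \<delta>). i < k \<and> \<delta> \<in> \<Delta> i \<and> g \<in> \<delta> <# T i"
    proof (rule ex1I[of _ "(i, ctr A)"])
      show "case (i, ctr A) of (i, \<delta>) \<Rightarrow> i < k \<and> \<delta> \<in> \<Delta> i \<and> g \<in> \<delta> <# T i" using i dA gA by simp
      fix y assume y: "case y of (i, \<delta>) \<Rightarrow> i < k \<and> \<delta> \<in> \<Delta> i \<and> g \<in> \<delta> <# T i"
      obtain i' \<delta>' where y': "y = (i', \<delta>')" by (cases y)
      then have h: "i' < k" "\<delta>' \<in> \<Delta> i'" "g \<in> \<delta>' <# T i'" using y by auto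
      obtain B where B: "B \<in> P" "ctr B = \<delta>'" "sh B = Ls ! i'" "\<delta>' <# T i' = B" using key[OF h(2)] by blast
      have "B = A" using lvl_uniq[OF L B(1) A(1)] h(3) B(4) A(2) by simp
      then have "\<delta>' = ctr A" "Ls ! i' = Ls ! i" using B i by auto
      then have "i' = i" using dL h(1) i(1) nth_eq_iff_index_eq unfolding k_def by blast
      then show "y = (i, ctr A)" using y' \<open>\<delta>' = ctr A\<close> by simp
    qed
  qed
  have k1: "1 \<le> k" unfolding k_def Ls_def by simp
  have Tp: "\<forall>i<k. finite (T i) \<and> T i \<subseteq> carrier G \<and> \<one> \<in> T i"
    using inSh sh_fin sh_sub sh_one unfolding T_def by metis
  have Dp: "\<forall>i<k. \<Delta> i \<noteq> {} \<and> \<Delta> i \<subseteq> carrier G"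
  proof (intro allI impI conjI)
    fix i assume "i < k"
    then obtain A where "A \<in> P" "Ls ! i = sh A" using inSh by blast
    then show "\<Delta> i \<noteq> {}" unfolding \<Delta>_def by auto
    show "\<Delta> i \<subseteq> carrier G" unfolding \<Delta>_def using ctrc by auto
  qed
  have card_eq: "\<forall>i<k. \<forall>j<k. card (T i) = card (T j)"
    using inSh sh_card unfolding T_def by metis
  have fair: "fair_polytiling G k \<Delta> T"
    unfolding fair_polytiling_def polytiling_def using k1 Tp Dp part card_eq by blast
  have ind: "induced_partition G k \<Delta> T = P"
  proof
    show "induced_partition G k \<Delta> T \<subseteq> P"
      unfolding induced_partition_def using key by fastforce
    show "P \<subseteq> induced_partition G k \<Delta> T"
    proof
      fix A assume A: "A \<in> P"
      obtain i where i: "i < k" "Ls ! i = sh A" using idx[OF A] by blast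
      have "ctr A \<in> \<Delta> i" unfolding \<Delta>_def using A i by auto
      moreover have "ctr A <# T i = A" unfolding T_def using i sh_back A by simp
      ultimately show "A \<in> induced_partition G k \<Delta> T" unfolding induced_partition_def using i by blast
    qed
  qed
  have "\<one> \<in> \<Delta> 0"
  proof -
    have "ctr A0 = \<one>" unfolding ctr_def using A0 by simp
    moreover have "sh A0 = Ls ! 0" using shA0 unfolding Ls_def by simp
    ultimately show ?thesis unfolding \<Delta>_def using A0 by force
  qed
  moreover have "T 0 = A0" unfolding T_def Ls_def by simp
  ultimately show ?thesis using fair ind by blast
qed

end


context gset
begin

lemma step:
  assumes inf: "infinite (carrier G)" and reach: "\<And>g. g \<in> carrier G \<Longrightarrow> \<exists>k. (\<one>, g) \<in> E ^^ k"
    and L: "lvl P m D" and A0: "A0 \<in> P" "\<one> \<in> A0"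
  shows "\<exists>P' m' D' A0'. lvl P' m' D' \<and> (\<forall>A\<in>P. \<exists>B\<in>P'. A \<subseteq> B) \<and> A0' \<in> P' \<and> \<one> \<in> A0' \<and> ball R \<subseteq> A0'"
proof -
  have Pc: "\<forall>A\<in>P. A \<subseteq> carrier G" and Pu: "\<forall>g\<in>carrier G. \<exists>!A. A \<in> P \<and> g \<in> A"
    using L unfolding lvl_def by auto
  define blk where "blk g = (THE A. A \<in> P \<and> g \<in> A)" for g
  have blk: "blk g \<in> P \<and> g \<in> blk g" if "g \<in> carrier G" for g
  proof -
    have "\<exists>!A. A \<in> P \<and> g \<in> A" using Pu that by simp
    then show ?thesis unfolding blk_def by (rule theI')
  qed
  have blk_eq: "blk g = A" if "A \<in> P" "g \<in> A" for g A
  proof -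
    have gc: "g \<in> carrier G" using Pc that by blast
    show ?thesis using lvl_uniq[OF L _ that(1) _ that(2), of "blk g" ] blk[OF gc] by simp
  qed
  have blk1: "blk \<one> = A0" using blk_eq A0 by simp
  define EXr where "EXr = {(A,B). A \<in> P \<and> B \<in> P \<and> (\<exists>a\<in>A. \<exists>b\<in>B. (a,b) \<in> E)}"
  have EXr_refl: "(A,A) \<in> EXr" if hA: "A \<in> P" for A
  proof -
    obtain a where "a \<in> A" using lvl_block[OF L hA] by blast
    then have "(a,a) \<in> E" using E_refl Pc hA by blast
    then show ?thesis unfolding EXr_def using hA \<open>a \<in> A\<close> by blast
  qed
  have EXr_sym: "(B,A) \<in> EXr" if "(A,B) \<in> EXr" for A B
    using that E_sym unfolding EXr_def by blast
  have EXr_P: "A \<in> P \<and> B \<in> P" if "(A,B) \<in> EXr" for A B using that unfolding EXr_def by blast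
  have X1: "(blk x, blk y) \<in> EXr ^^ k" if "(x,y) \<in> E ^^ k" "x \<in> carrier G" for x y k
    using that
  proof (induction k arbitrary: y)
    case 0 then show ?case using EXr_refl blk by simp
  next
    case (Suc k)
    then obtain z where z: "(x,z) \<in> E ^^ k" "(z,y) \<in> E" by (auto elim: relpow_Suc_E)
    have zc: "z \<in> carrier G" "y \<in> carrier G" using z E_carrier by auto
    have zy: "(blk z, blk y) \<in> EXr" unfolding EXr_def using blk zc z(2) by blast
    have "(blk x, blk z) \<in> EXr ^^ k" using Suc.IH[OF z(1) Suc.prems(2)] .
    then show ?case using zy by (rule relpow_Suc_I)
  qed
  have X2: "B \<in> P \<and> (\<forall>a\<in>A. \<exists>b\<in>B. (a,b) \<in> E ^^ (k * Suc D))" if "(A,B) \<in> EXr ^^ k" "A \<in> P" for A B k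
    using that
  proof (induction k arbitrary: B)
    case 0
    then have "B = A" by simp
    then show ?case using 0 relpow_0_I by auto
  next
    case (Suc k)
    then obtain C where C: "(A,C) \<in> EXr ^^ k" "(C,B) \<in> EXr" by (auto elim: relpow_Suc_E)
    have IH: "C \<in> P \<and> (\<forall>a\<in>A. \<exists>c\<in>C. (a,c) \<in> E ^^ (k * Suc D))" using Suc.IH[OF C(1) Suc.prems(2)] .
    obtain c' b where cb: "c' \<in> C" "b \<in> B" "(c',b) \<in> E" using C(2) unfolding EXr_def by blast
    have BP: "B \<in> P" using C(2) EXr_P by blast
    have "\<forall>a\<in>A. \<exists>b\<in>B. (a,b) \<in> E ^^ (Suc k * Suc D)"
    proof
      fix a assume "a \<in> A"
      then obtain c where c: "c \<in> C" "(a,c) \<in> E ^^ (k * Suc D)" using IH by blast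
      have "(c,c') \<in> E ^^ D" using lvl_block[OF L] IH c(1) cb(1) by blast
      then have "(a,c') \<in> E ^^ (k * Suc D + D)" using c(2) relpow_trans by fast
      then have "(a,b) \<in> E ^^ Suc (k * Suc D + D)" using cb(3) by (rule relpow_Suc_I)
      moreover have "Suc (k * Suc D + D) = Suc k * Suc D" by simp
      ultimately show "\<exists>b\<in>B. (a,b) \<in> E ^^ (Suc k * Suc D)" using cb(2) by metis
    qed
    then show ?case using BP by blast
  qed
  have X3: "finite {B. (A,B) \<in> EXr ^^ k}" if hA: "A \<in> P" for A k
  proof -
    have "{B. (A,B) \<in> EXr ^^ k} \<subseteq> blk ` (\<Union>a\<in>A. {y. (a,y) \<in> E ^^ (k * Suc D)})"
    proof
      fix B assume "B \<in> {B. (A,B) \<in> EXr ^^ k}"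
      then have h: "B \<in> P \<and> (\<forall>a\<in>A. \<exists>b\<in>B. (a,b) \<in> E ^^ (k * Suc D))" using X2 hA by blast
      obtain a where a: "a \<in> A" using lvl_block[OF L hA] by blast
      then obtain b where b: "b \<in> B" "(a,b) \<in> E ^^ (k * Suc D)" using h by blast
      have "blk b = B" using blk_eq h b by blast
      then show "B \<in> blk ` (\<Union>a\<in>A. {y. (a,y) \<in> E ^^ (k * Suc D)})" using a b by blast
    qed
    moreover have "finite (\<Union>a\<in>A. {y. (a,y) \<in> E ^^ (k * Suc D)})"
      using lvl_block[OF L hA] ball_finite_gen Pc hA by blast
    ultimately show ?thesis using finite_subset by blast
  qed
  have EXr_pad: "(A,B) \<in> EXr ^^ b" if "(A,B) \<in> EXr ^^ a" "B \<in> P" "a \<le> b" for A B a b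
    using relpow_pad[OF that(1) EXr_refl[OF that(2)] that(3)] .
  have EXrpow_sym: "(B,A) \<in> EXr ^^ k" if "(A,B) \<in> EXr ^^ k" for A B k
    using relpow_sym[of EXr] EXr_sym that by blast
  define dX where "dX B = (LEAST k. (A0,B) \<in> EXr ^^ k)" for B
  have dX_ex: "\<exists>k. (A0,B) \<in> EXr ^^ k" if hB: "B \<in> P" for B
  proof -
    obtain b where b: "b \<in> B" using lvl_block[OF L hB] by blast
    then have bc: "b \<in> carrier G" using Pc hB by blast
    obtain k where "(\<one>, b) \<in> E ^^ k" using reach[OF bc] by blast
    then have "(blk \<one>, blk b) \<in> EXr ^^ k" using X1 by simp
    then show ?thesis using blk1 blk_eq[OF hB b] by auto
  qed
  have dX_in: "(A0,B) \<in> EXr ^^ (dX B)" if "B \<in> P" for B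
    unfolding dX_def using dX_ex[OF that] by (rule LeastI_ex)
  have dX_le: "dX B \<le> k" if "(A0,B) \<in> EXr ^^ k" for B k
    unfolding dX_def using that by (rule Least_le)
  have dX0: "B = A0" if "dX B = 0" "B \<in> P" for B using dX_in[OF that(2)] that(1) by simp
  have dXA0: "dX A0 = 0" using dX_le[of A0 0] by simp
  have dX_pred: "\<exists>B'. B' \<in> P \<and> dX B' = n \<and> (B',B) \<in> EXr" if hB: "B \<in> P" "dX B = Suc n" for B n
  proof -
    have "(A0,B) \<in> EXr ^^ Suc n" using dX_in[OF hB(1)] hB(2) by simp
    then obtain B' where B': "(A0,B') \<in> EXr ^^ n" "(B',B) \<in> EXr" by (auto elim: relpow_Suc_E)
    have BP: "B' \<in> P" using B'(2) EXr_P by blast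
    have "dX B' \<le> n" using dX_le[OF B'(1)] .
    moreover have "\<not> dX B' < n"
    proof
      assume "dX B' < n"
      have "(A0,B) \<in> EXr ^^ Suc (dX B')" using dX_in[OF BP] B'(2) by (rule relpow_Suc_I)
      then have "dX B \<le> Suc (dX B')" by (rule dX_le)
      then show False using \<open>dX B' < n\<close> hB(2) by simp
    qed
    ultimately show ?thesis using BP B'(2) by (intro exI[of _ B']) simp
  qed
  define par where "par B = (if dX B \<le> Suc R then A0 else (SOME B'. B' \<in> P \<and> dX B' = dX B - 1 \<and> (B',B) \<in> EXr))" for B
  have par_big: "par B \<in> P \<and> dX (par B) = dX B - 1 \<and> (par B, B) \<in> EXr" if "B \<in> P" "Suc R < dX B" for B
  proof -
    have "\<exists>B'. B' \<in> P \<and> dX B' = dX B - 1 \<and> (B',B) \<in> EXr" using dX_pred[OF that(1), of "dX B - 1"] that(2) by simp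
    then have "(SOME B'. B' \<in> P \<and> dX B' = dX B - 1 \<and> (B',B) \<in> EXr) \<in> P \<and>
      dX (SOME B'. B' \<in> P \<and> dX B' = dX B - 1 \<and> (B',B) \<in> EXr) = dX B - 1 \<and>
      ((SOME B'. B' \<in> P \<and> dX B' = dX B - 1 \<and> (B',B) \<in> EXr), B) \<in> EXr" by (rule someI_ex)
    moreover have "par B = (SOME B'. B' \<in> P \<and> dX B' = dX B - 1 \<and> (B',B) \<in> EXr)"
      unfolding par_def using that(2) by simp
    ultimately show ?thesis by simp
  qed
  define dp where "dp B = (if B = A0 then 0 else if dX B \<le> Suc R then 1 else dX B - R)" for B
  have chEX: "(par W, W) \<in> EXr ^^ Suc R" if "W \<in> P" "W \<noteq> A0" for W
  proof (cases "dX W \<le> Suc R")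
    case True
    then have "par W = A0" unfolding par_def by simp
    then show ?thesis using EXr_pad[OF dX_in[OF that(1)] that(1) True] by simp
  next
    case False
    then have "(par W, W) \<in> EXr ^^ 1" using par_big[OF that(1)] by simp
    moreover have "1 \<le> Suc R" by simp
    ultimately show ?thesis using EXr_pad that(1) by blast
  qed
  have infP: "infinite P"
  proof
    assume fP: "finite P"
    have "carrier G \<subseteq> \<Union>P" using blk by blast
    moreover have "finite (\<Union>P)" using fP lvl_block[OF L] by blast
    ultimately show False using inf finite_subset by blast
  qed
  interpret T: rtree P A0 par dp
  proof
    show "A0 \<in> P" using A0 by simp
    show "infinite P" using infP .
    show "dp A0 = 0" unfolding dp_def by simp
    fix v assume v: "v \<in> P"
    show "finite {w \<in> P. w \<noteq> A0 \<and> par w = v}"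
    proof (rule finite_subset[OF _ X3[OF v, of "Suc R"]])
      show "{w \<in> P. w \<noteq> A0 \<and> par w = v} \<subseteq> {B. (v,B) \<in> EXr ^^ Suc R}" using chEX by blast
    qed
    assume vA: "v \<noteq> A0"
    show "par v \<in> P \<and> Suc (dp (par v)) = dp v"
    proof (cases "dX v \<le> Suc R")
      case True
      then show ?thesis unfolding par_def dp_def using vA A0 by simp
    next
      case False
      then have pb: "par v \<in> P" "dX (par v) = dX v - 1" using par_big[OF v] by auto
      then have "par v \<noteq> A0" using False dXA0 by auto
      then have e1: "dp (par v) = (if dX (par v) \<le> Suc R then 1 else dX (par v) - R)" unfolding dp_def by simp
      have e2: "dp v = dX v - R" using vA False unfolding dp_def by simp
      show ?thesis using pb e1 e2 False by (simp split: if_splits; arith)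
    qed
  qed
  have Tr_EX: "(x,y) \<in> EXr ^^ Suc R" if "(x,y) \<in> T.Tr" for x y
  proof -
    have xy: "x \<in> P" "y \<in> P" "x = y \<or> (x \<noteq> A0 \<and> par x = y) \<or> (y \<noteq> A0 \<and> par y = x)"
      using that unfolding T.Tr_def by auto
    consider "x = y" | "x \<noteq> A0 \<and> par x = y" | "y \<noteq> A0 \<and> par y = x" using xy(3) by blast
    then show ?thesis
    proof cases
      case 1 then show ?thesis using EXr_pad[of x y 0 "Suc R"] xy by simp
    next
      case 2 then show ?thesis using chEX[of x] xy EXrpow_sym by blast
    next
      case 3 then show ?thesis using chEX[of y] xy by blast
    qed
  qed
  have leaf: "{W. W \<in> P \<and> W \<noteq> A0 \<and> dX W \<le> R} \<subseteq> {w \<in> T.ch A0. T.ch w = {}}"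
  proof
    fix W assume W: "W \<in> {W. W \<in> P \<and> W \<noteq> A0 \<and> dX W \<le> R}"
    have "par W = A0" using W unfolding par_def by simp
    then have "W \<in> T.ch A0" using W unfolding T.ch_def by simp
    moreover have "T.ch W = {}"
    proof (rule ccontr)
      assume "T.ch W \<noteq> {}"
      then obtain V where V: "V \<in> P" "V \<noteq> A0" "par V = W" unfolding T.ch_def by blast
      show False
      proof (cases "dX V \<le> Suc R")
        case True then show False using V W unfolding par_def by simp
      next
        case False
        then have "dX (par V) = dX V - 1" using par_big[OF V(1)] by simp
        then have "dX V - 1 \<le> R" using V W by simp
        then show False using False by arith
      qed
    qed
    ultimately show "W \<in> {w \<in> T.ch A0. T.ch w = {}}" by simp
  qed
  obtain PP where PP: "finite PP" "A0 \<in> PP" "PP \<subseteq> P" "{w \<in> T.ch A0. T.ch w = {}} \<subseteq> PP"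
    and PQ: "\<And>c. card PP \<le> c \<Longrightarrow> (\<exists>Q. (\<forall>B\<in>Q. B \<subseteq> P \<and> card B = c \<and> (\<forall>x\<in>B. \<forall>y\<in>B. (x,y) \<in> T.Tr ^^ (3 * c)))
        \<and> (\<forall>u\<in>P. \<exists>!B. B \<in> Q \<and> u \<in> B) \<and> (\<exists>B\<in>Q. PP \<subseteq> B))"
    using T.tree_partition by blast
  define c where "c = card PP"
  obtain Q where Q1: "\<forall>B\<in>Q. B \<subseteq> P \<and> card B = c \<and> (\<forall>x\<in>B. \<forall>y\<in>B. (x,y) \<in> T.Tr ^^ (3 * c))"
    and Q2: "\<forall>u\<in>P. \<exists>!B. B \<in> Q \<and> u \<in> B" and Q3: "\<exists>B\<in>Q. PP \<subseteq> B"
    using PQ[of c] unfolding c_def by auto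
  have c1: "1 \<le> c" unfolding c_def using PP(1,2) by (metis One_nat_def Suc_leI card_gt_0_iff empty_iff)
  have m1: "1 \<le> m" using L unfolding lvl_def by simp
  define D' where "D' = (3 * c) * Suc R * Suc D + D"
  define P' where "P' = Union ` Q"
  have lvl': "lvl P' (c * m) D'"
    unfolding lvl_def
  proof (intro conjI)
    show "1 \<le> c * m" using c1 m1 by simp
    show "\<forall>A\<in>P'. A \<subseteq> carrier G \<and> card A = c * m \<and> (\<forall>x\<in>A. \<forall>y\<in>A. (x, y) \<in> E ^^ D')"
    proof
      fix A assume "A \<in> P'"
      then obtain B where B: "B \<in> Q" "A = \<Union>B" unfolding P'_def by blast
      have BP: "B \<subseteq> P" "card B = c" using Q1 B by auto
      have fB: "finite B" using BP(2) c1 by (metis card.infinite not_one_le_zero)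
      have "A \<subseteq> carrier G" using B BP Pc by blast
      moreover have "card A = c * m"
      proof -
        have "pairwise disjnt B"
          unfolding pairwise_def disjnt_def using lvl_uniq[OF L] BP(1) by blast
        moreover have "\<And>X. X \<in> B \<Longrightarrow> finite X" using lvl_block[OF L] BP(1) by blast
        ultimately have "card A = sum card B" unfolding B(2) by (rule card_Union_disjoint)
        also have "\<dots> = sum (\<lambda>_. m) B" using lvl_block[OF L] BP(1) by (intro sum.cong) auto
        also have "\<dots> = c * m" using BP(2) by simp
        finally show ?thesis .
      qed
      moreover have "\<forall>x\<in>A. \<forall>y\<in>A. (x, y) \<in> E ^^ D'"
      proof (intro ballI)
        fix x y assume xy: "x \<in> A" "y \<in> A"
        then obtain X1 Y1 where XY: "X1 \<in> B" "Y1 \<in> B" "x \<in> X1" "y \<in> Y1" using B by blast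
        have "(X1,Y1) \<in> T.Tr ^^ (3 * c)" using Q1 B XY by blast
        then have "(X1,Y1) \<in> EXr ^^ (3 * c * Suc R)" using relpow_mult[where R="T.Tr" and S=EXr and a="Suc R"] Tr_EX by blast
        then obtain b where b: "b \<in> Y1" "(x,b) \<in> E ^^ (3 * c * Suc R * Suc D)"
          using X2[of X1 Y1] XY BP by blast
        have "(b,y) \<in> E ^^ D" using lvl_block[OF L] b XY BP by blast
        then show "(x,y) \<in> E ^^ D'" unfolding D'_def using b(2) relpow_trans by fast
      qed
      ultimately show "A \<subseteq> carrier G \<and> card A = c * m \<and> (\<forall>x\<in>A. \<forall>y\<in>A. (x, y) \<in> E ^^ D')" by blast
    qed
    show "\<forall>g\<in>carrier G. \<exists>!A. A \<in> P' \<and> g \<in> A"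
    proof
      fix g assume g: "g \<in> carrier G"
      obtain B where B: "B \<in> Q" "blk g \<in> B" using Q2 blk[OF g] by blast
      show "\<exists>!A. A \<in> P' \<and> g \<in> A"
      proof (rule ex1I[of _ "\<Union>B"])
        show "\<Union>B \<in> P' \<and> g \<in> \<Union>B" using B blk[OF g] unfolding P'_def by blast
        fix A assume A: "A \<in> P' \<and> g \<in> A"
        then obtain B1 where B1: "B1 \<in> Q" "A = \<Union>B1" unfolding P'_def by blast
        then obtain C where C: "C \<in> B1" "g \<in> C" using A by blast
        have "C \<in> P" using C Q1 B1 by blast
        then have "C = blk g" using blk_eq C by simp
        then have "B1 = B" using Q2 B B1 C blk[OF g] by blast
        then show "A = \<Union>B" using B1 by simp
      qed
    qed
  qed
  obtain Q0 where Q0: "Q0 \<in> Q" "PP \<subseteq> Q0" using Q3 by blast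
  have refine: "\<forall>A\<in>P. \<exists>B\<in>P'. A \<subseteq> B"
  proof
    fix A assume "A \<in> P"
    then obtain B where "B \<in> Q" "A \<in> B" using Q2 by blast
    then show "\<exists>B\<in>P'. A \<subseteq> B" unfolding P'_def by blast
  qed
  have A0': "\<Union>Q0 \<in> P'" "\<one> \<in> \<Union>Q0" using Q0 PP(2) A0 unfolding P'_def by blast+
  have "ball R \<subseteq> \<Union>Q0"
  proof
    fix g assume "g \<in> ball R"
    then have gR: "(\<one>, g) \<in> E ^^ R" unfolding ball_def by simp
    then have gc: "g \<in> carrier G" using Epow_carrier by simp
    have "(A0, blk g) \<in> EXr ^^ R" using X1[OF gR] blk1 by simp
    then have dR: "dX (blk g) \<le> R" by (rule dX_le)
    have "blk g \<in> PP"
    proof (cases "blk g = A0")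
      case True then show ?thesis using PP by simp
    next
      case False then show ?thesis using leaf PP(4) dR blk[OF gc] by blast
    qed
    then show "g \<in> \<Union>Q0" using Q0 blk[OF gc] by blast
  qed
  then show ?thesis using lvl' refine A0' by blast
qed

end


context gset
begin

lemma poly_seq:
  assumes inf: "infinite (carrier G)" and reach: "\<And>g. g \<in> carrier G \<Longrightarrow> \<exists>k. (\<one>, g) \<in> E ^^ k"
  shows "\<exists>(k :: nat \<Rightarrow> nat) (\<Delta> :: nat \<Rightarrow> nat \<Rightarrow> 'a set) (T :: nat \<Rightarrow> nat \<Rightarrow> 'a set).
        (\<forall>n. fair_polytiling G (k n) (\<Delta> n) (T n)) \<and>
        (\<forall>n. finer (induced_partition G (k n) (\<Delta> n) (T n))
                    (induced_partition G (k (Suc n)) (\<Delta> (Suc n)) (T (Suc n)))) \<and>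
        (\<forall>n. \<one> \<in> \<Delta> n 0) \<and>
        (\<forall>n. T n 0 \<subseteq> T (Suc n) 0) \<and> (\<Union>n. T n 0) = carrier G"
proof -
  define Inv where "Inv n st \<longleftrightarrow> (case st of (P, m, D, A0) \<Rightarrow> lvl P m D \<and> A0 \<in> P \<and> \<one> \<in> A0 \<and> ball n \<subseteq> A0)"
    for n and st :: "'a set set \<times> nat \<times> nat \<times> 'a set"
  define Rel where "Rel st st' \<longleftrightarrow> (\<forall>A\<in>fst st. \<exists>B\<in>fst st'. A \<subseteq> B)"
    for st st' :: "'a set set \<times> nat \<times> nat \<times> 'a set"
  define init :: "'a set set \<times> nat \<times> nat \<times> 'a set" where "init = ((\<lambda>g. {g}) ` carrier G, 1, 0, {\<one>})"
  have I0: "Inv 0 init"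
  proof -
    have "lvl ((\<lambda>g. {g}) ` carrier G) 1 0" unfolding lvl_def by auto
    moreover have "ball 0 \<subseteq> {\<one>}" unfolding ball_def by auto
    ultimately show ?thesis unfolding Inv_def init_def by auto
  qed
  have stepI: "\<exists>st'. Inv (Suc n) st' \<and> Rel st st'" if "Inv n st" for n st
  proof -
    obtain P m D A0 where st: "st = (P, m, D, A0)" by (cases st) auto
    then have h: "lvl P m D" "A0 \<in> P" "\<one> \<in> A0" using that unfolding Inv_def by auto
    obtain P' m' D' A0' where "lvl P' m' D'" "\<forall>A\<in>P. \<exists>B\<in>P'. A \<subseteq> B" "A0' \<in> P'" "\<one> \<in> A0'" "ball (Suc n) \<subseteq> A0'"
      using step[OF inf reach h, of "Suc n"] by blast
    then have "Inv (Suc n) (P', m', D', A0') \<and> Rel st (P', m', D', A0')" unfolding Inv_def Rel_def st by simp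
    then show ?thesis by blast
  qed
  define nxt where "nxt n st = (SOME st'. Inv (Suc n) st' \<and> Rel st st')" for n st
  define sq where "sq = rec_nat init nxt"
  have sq0: "sq 0 = init" and sqS: "sq (Suc n) = nxt n (sq n)" for n unfolding sq_def by simp_all
  have sqI: "Inv n (sq n) \<and> Rel (sq n) (sq (Suc n))" for n
  proof (induction n)
    case 0
    have "Inv (Suc 0) (nxt 0 init) \<and> Rel init (nxt 0 init)" unfolding nxt_def
      using stepI[OF I0] by (rule someI_ex)
    then show ?case using I0 sq0 sqS by simp
  next
    case (Suc n)
    have I: "Inv (Suc n) (sq (Suc n))" unfolding sqS nxt_def using stepI[OF conjunct1[OF Suc]]
      by (rule someI_ex[THEN conjunct1])
    have "Inv (Suc (Suc n)) (nxt (Suc n) (sq (Suc n))) \<and> Rel (sq (Suc n)) (nxt (Suc n) (sq (Suc n)))"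
      unfolding nxt_def using stepI[OF I] by (rule someI_ex)
    then show ?case using I sqS by simp
  qed
  define Pn where "Pn n = fst (sq n)" for n
  define An where "An n = snd (snd (snd (sq n)))" for n
  have lv: "\<exists>m D. lvl (Pn n) m D" and An: "An n \<in> Pn n" "\<one> \<in> An n" "ball n \<subseteq> An n" for n
    using sqI[of n] unfolding Inv_def Pn_def An_def by (auto split: prod.splits)
  have ref: "\<forall>A\<in>Pn n. \<exists>B\<in>Pn (Suc n). A \<subseteq> B" for n using sqI[of n] unfolding Rel_def Pn_def by simp
  have "\<forall>n. \<exists>x. case x of (k, \<Delta>, T) \<Rightarrow> fair_polytiling G k \<Delta> T \<and> induced_partition G k \<Delta> T = Pn n
     \<and> \<one> \<in> \<Delta> 0 \<and> T 0 = An n"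
  proof
    fix n
    obtain m D where "lvl (Pn n) m D" using lv by blast
    from tiling[OF this An(1,2)] obtain k \<Delta> T where "fair_polytiling G k \<Delta> T \<and> induced_partition G k \<Delta> T = Pn n
     \<and> \<one> \<in> \<Delta> 0 \<and> T 0 = An n" by blast
    then show "\<exists>x. case x of (k, \<Delta>, T) \<Rightarrow> fair_polytiling G k \<Delta> T \<and> induced_partition G k \<Delta> T = Pn n
     \<and> \<one> \<in> \<Delta> 0 \<and> T 0 = An n" by (intro exI[of _ "(k, \<Delta>, T)"]) simp
  qed
  then have "\<exists>f. \<forall>n. case f n of (k, \<Delta>, T) \<Rightarrow> fair_polytiling G k \<Delta> T \<and> induced_partition G k \<Delta> T = Pn n
     \<and> \<one> \<in> \<Delta> 0 \<and> T 0 = An n" by (rule choice)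
  then obtain f where f: "\<forall>n. case f n of (k, \<Delta>, T) \<Rightarrow> fair_polytiling G k \<Delta> T \<and> induced_partition G k \<Delta> T = Pn n
     \<and> \<one> \<in> \<Delta> 0 \<and> T 0 = An n" by blast
  define kk where "kk n = fst (f n)" for n
  define DD where "DD n = fst (snd (f n))" for n
  define TT where "TT n = snd (snd (f n))" for n
  have F: "fair_polytiling G (kk n) (DD n) (TT n)" "induced_partition G (kk n) (DD n) (TT n) = Pn n"
    "\<one> \<in> DD n 0" "TT n 0 = An n" for n
    using f[rule_format, of n] unfolding kk_def DD_def TT_def by (auto split: prod.splits)
  have mono: "An n \<subseteq> An (Suc n)" for n
  proof -
    obtain B where B: "B \<in> Pn (Suc n)" "An n \<subseteq> B" using ref[of n] An(1)[of n] by blast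
    obtain m D where L: "lvl (Pn (Suc n)) m D" using lv by blast
    have "B = An (Suc n)" using lvl_uniq[OF L B(1) An(1)[of "Suc n"]] B(2) An(2) by blast
    then show ?thesis using B by simp
  qed
  have un: "(\<Union>n. An n) = carrier G"
  proof
    show "(\<Union>n. An n) \<subseteq> carrier G"
    proof
      fix g assume "g \<in> (\<Union>n. An n)"
      then obtain n where "g \<in> An n" by blast
      moreover obtain m D where "lvl (Pn n) m D" using lv by blast
      ultimately show "g \<in> carrier G" using lvl_block An(1) by blast
    qed
    show "carrier G \<subseteq> (\<Union>n. An n)"
    proof
      fix g assume "g \<in> carrier G"
      then obtain k where "(\<one>, g) \<in> E ^^ k" using reach by blast
      then have "g \<in> An k" using An(3)[of k] unfolding ball_def by blast
      then show "g \<in> (\<Union>n. An n)" by blast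
    qed
  qed
  have c1: "\<forall>n. fair_polytiling G (kk n) (DD n) (TT n)" using F by simp
  have c2: "\<forall>n. finer (induced_partition G (kk n) (DD n) (TT n)) (induced_partition G (kk (Suc n)) (DD (Suc n)) (TT (Suc n)))"
    unfolding F(2) finer_def using ref by blast
  have c3: "\<forall>n. \<one> \<in> DD n 0" using F by simp
  have c4: "\<forall>n. TT n 0 \<subseteq> TT (Suc n) 0" using F(4) mono by simp
  have c5: "(\<Union>n. TT n 0) = carrier G" using F(4) un by simp
  show ?thesis by (intro exI[of _ kk] exI[of _ DD] exI[of _ TT]) (use c1 c2 c3 c4 c5 in blast)
qed

end

context group
begin

lemma poly_ccc_main:
  assumes fg: "finitely_generated G"
  shows "poly_ccc G"
proof -
  obtain S where S: "finite S" "S \<subseteq> carrier G" "generate G S = carrier G"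
    using fg unfolding finitely_generated_def by blast
  define U where "U = S \<union> (\<lambda>s. inv s) ` S \<union> {\<one>}"
  interpret gset G U
  proof
    show "U \<subseteq> carrier G" unfolding U_def using S by auto
    show "finite U" unfolding U_def using S by simp
    show "\<one> \<in> U" unfolding U_def by simp
    fix u assume "u \<in> U"
    then consider "u \<in> S" | s where "s \<in> S" "u = inv s" | "u = \<one>" unfolding U_def by blast
    then show "inv u \<in> U"
    proof cases
      case 1 then show ?thesis unfolding U_def by simp
    next
      case 2 then show ?thesis unfolding U_def using S(2) by auto
    next
      case 3 then show ?thesis unfolding U_def by simp
    qed
  qed
  have SU: "S \<subseteq> U" unfolding U_def by auto
  have reach: "\<exists>k. (\<one>, g) \<in> E ^^ k" if "g \<in> carrier G" for g
    using gen_reach[OF _ SU] that S(3) by simp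
  have cnt: "countable (carrier G)"
  proof -
    have "carrier G \<subseteq> (\<Union>k. ball k)" using reach unfolding ball_def by blast
    moreover have "countable (\<Union>k. ball k)" using ball_finite by (simp add: countable_finite)
    ultimately show ?thesis using countable_subset by blast
  qed
  show ?thesis
  proof (cases "finite (carrier G)")
    case True
    have lc: "\<one> <# carrier G = carrier G" using lcos_mult_one by simp
    have fp: "fair_polytiling G 1 (\<lambda>i. {\<one>}) (\<lambda>i. carrier G)"
      unfolding fair_polytiling_def polytiling_def
    proof (intro conjI)
      show "\<forall>g\<in>carrier G. \<exists>!(i, \<delta>). i < (1::nat) \<and> \<delta> \<in> {\<one>} \<and> g \<in> \<delta> <# carrier G"
      proof
        fix g assume g: "g \<in> carrier G"
        show "\<exists>!(i, \<delta>). i < (1::nat) \<and> \<delta> \<in> {\<one>} \<and> g \<in> \<delta> <# carrier G"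
          using g lc by auto
      qed
    qed (use True in auto)
    have ip: "induced_partition G 1 (\<lambda>i. {\<one>}) (\<lambda>i. carrier G) = {carrier G}"
      unfolding induced_partition_def using lc by auto
    have ex: "\<exists>(k :: nat \<Rightarrow> nat) (\<Delta> :: nat \<Rightarrow> nat \<Rightarrow> 'a set) (T :: nat \<Rightarrow> nat \<Rightarrow> 'a set).
        (\<forall>n. fair_polytiling G (k n) (\<Delta> n) (T n)) \<and>
        (\<forall>n. finer (induced_partition G (k n) (\<Delta> n) (T n))
                    (induced_partition G (k (Suc n)) (\<Delta> (Suc n)) (T (Suc n)))) \<and>
        (\<forall>n. \<one> \<in> \<Delta> n 0) \<and>
        (\<forall>n. T n 0 \<subseteq> T (Suc n) 0) \<and> (\<Union>n. T n 0) = carrier G"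
      apply (rule exI[of _ "\<lambda>n. 1"])
      apply (rule exI[of _ "\<lambda>n i. {\<one>}"])
      apply (rule exI[of _ "\<lambda>n i. carrier G"])
      using fp ip by (auto simp: finer_def)
    show ?thesis unfolding poly_ccc_def using cnt ex by blast
  next
    case False
    show ?thesis unfolding poly_ccc_def using cnt poly_seq[OF False reach] by blast
  qed
qed

end

theorem theorem6p1:
  fixes G :: "('a, 'b) monoid_scheme"
  assumes "group G" and "finitely_generated G"
  shows "poly_ccc G"
  using group.poly_ccc_main[OF assms(1,2)] .


end
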